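(* Let $n\ge2$, $\alpha\in(0,\frac rn)$ and $M>0$. Let $(\bar m,\bar w)\in\mathcal A_M$ be a minimizer of $e_{0,\alpha,M}:=\inf_{(m,w)\in\mathcal A_M}\mathcal E_0(m,w)$, where $\mathcal E_0(m,w)=\int_{\mathbb R^n}\big(C_Lm|\frac wm|^r-\frac1{\alpha+1}m^{\alpha+1}\big)dx$, and assume there exist $\lambda<0$ and $\bar u\in C^2(\mathbb R^n)$ bounded from below such that $\bar m\in W^{1,p}(\mathbb R^n)$ for all $p\ge1$, $0<\bar m\le c_1e^{-c_2|x|}$ for some $c_1,c_2>0$, $\bar w=-C_Hr'\bar m|\nabla\bar u|^{r'-2}\nabla\bar u$, and $(\bar m,\bar u,\lambda)$ solves $-\Delta u+C_H|\nabla u|^{r'}+\lambda=-m^\alpha$, $\Delta m+C_Hr'\nabla\cdot(m|\nabla u|^{r'-2}\nabla u)=0$, $\int m=M$. Then $(\bar m,\bar w)$ attains the infimum $\Gamma_\alpha$, and $$\Gamma_\alpha=\frac{n\alpha\,(-e_{0,\alpha,M})^{\frac{n\alpha-r}{r}}M^{\frac{(\alpha+1)r-n\alpha}{r}}}{r(1+\alpha)}\Big(\frac{r-n\alpha}{n\alpha}\Big)^{\frac{r-n\alpha}{r}} .$$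
   Context: $r'>1$, $C_H>0$, $r=r'/(r'-1)$, $C_L=\frac1r(r'C_H)^{1/(1-r')}$; $\hat q=\frac n{n-r+1}$ if $r<n$, a fixed number in $(\frac{2n}{n+2},n)$ if $r=n$, $r$ if $r>n$. The integrand $m|w/m|^r$ means $|w|^rm^{1-r}$ where $m>0$, $0$ where $(m,w)=(0,0)$, $+\infty$ where $m=0\ne w$. $\mathcal A$: pairs $(m,w)\in(L^1\cap W^{1,\hat q})(\mathbb R^n)\times L^1(\mathbb R^n)$ with $\int\nabla m\cdot\nabla\varphi=\int w\cdot\nabla\varphi$ for all $\varphi\in C_c^\infty$, $\int|x|^bm<\infty$ for a fixed $b>0$, $m\ge0$, $m\not\equiv0$; $\mathcal A_M=\{(m,w)\in\mathcal A:\int m=M\}$. $\Gamma_\alpha=\inf_{\mathcal A}\frac{(C_L\int m|w/m|^r)^{n\alpha/r}(\int m)^{((\alpha+1)r-n\alpha)/r}}{\int m^{\alpha+1}}$ (equivalently the infimum over $\mathcal A_M$). *)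

theory Defs
  imports "HOL-Analysis.Analysis"
begin

text \<open>Functions on R^n are modelled on an arbitrary Euclidean space 'a, n = DIM('a).\<close>

definition pd :: "'a::euclidean_space \<Rightarrow> ('a \<Rightarrow> real) \<Rightarrow> 'a \<Rightarrow> real" where
  "pd i f x = frechet_derivative f (at x) i"

definition grad :: "('a::euclidean_space \<Rightarrow> real) \<Rightarrow> 'a \<Rightarrow> 'a" where
  "grad f x = (\<Sum>i\<in>Basis. pd i f x *\<^sub>R i)"

definition lap :: "('a::euclidean_space \<Rightarrow> real) \<Rightarrow> 'a \<Rightarrow> real" where
  "lap f x = (\<Sum>i\<in>Basis. pd i (pd i f) x)"

fun pderivs :: "'a::euclidean_space list \<Rightarrow> ('a \<Rightarrow> real) \<Rightarrow> 'a \<Rightarrow> real" where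
  "pderivs [] f = f"
| "pderivs (i # is) f = pd i (pderivs is f)"

text \<open>C^infinity: all iterated partial derivatives exist (and hence are continuous).\<close>
definition smooth_fun :: "('a::euclidean_space \<Rightarrow> real) \<Rightarrow> bool" where
  "smooth_fun f \<longleftrightarrow> (\<forall>is. set is \<subseteq> Basis \<longrightarrow> (\<forall>x. pderivs is f differentiable at x))"

definition test_fun :: "('a::euclidean_space \<Rightarrow> real) \<Rightarrow> bool" where
  "test_fun \<phi> \<longleftrightarrow> smooth_fun \<phi> \<and> bounded {x. \<phi> x \<noteq> 0}"

definition C2_fun :: "('a::euclidean_space \<Rightarrow> real) \<Rightarrow> bool" where
  "C2_fun u \<longleftrightarrow> (\<forall>x. u differentiable at x)
     \<and> (\<forall>i\<in>Basis. \<forall>x. pd i u differentiable at x)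
     \<and> (\<forall>i\<in>Basis. \<forall>j\<in>Basis. continuous_on UNIV (pd j (pd i u)))"

definition Lp :: "real \<Rightarrow> ('a::euclidean_space \<Rightarrow> 'b::{real_normed_vector, second_countable_topology}) \<Rightarrow> bool" where
  "Lp p f \<longleftrightarrow> f \<in> borel_measurable lebesgue \<and> integrable lebesgue (\<lambda>x. norm (f x) powr p)"

definition locint :: "('a::euclidean_space \<Rightarrow> 'b::{real_normed_vector, second_countable_topology}) \<Rightarrow> bool" where
  "locint f \<longleftrightarrow> f \<in> borel_measurable lebesgue \<and>
     (\<forall>K. compact K \<longrightarrow> integrable lebesgue (\<lambda>x. indicator K x * norm (f x)))"

definition weak_grad :: "('a::euclidean_space \<Rightarrow> real) \<Rightarrow> ('a \<Rightarrow> 'a) \<Rightarrow> bool" where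
  "weak_grad m g \<longleftrightarrow> locint m \<and> locint g \<and>
     (\<forall>\<phi>. test_fun \<phi> \<longrightarrow> (\<forall>i\<in>Basis.
        (\<integral>x. m x * pd i \<phi> x \<partial>lebesgue) = - (\<integral>x. (g x \<bullet> i) * \<phi> x \<partial>lebesgue)))"

definition W1p :: "real \<Rightarrow> ('a::euclidean_space \<Rightarrow> real) \<Rightarrow> bool" where
  "W1p p m \<longleftrightarrow> Lp p m \<and> (\<exists>g. weak_grad m g \<and> Lp p g)"

definition conj_exp :: "real \<Rightarrow> real" where
  "conj_exp r' = r' / (r' - 1)"

definition C_L :: "real \<Rightarrow> real \<Rightarrow> real" where
  "C_L r' CH = (1 / conj_exp r') * (r' * CH) powr (1 / (1 - r'))"

text \<open>hat q; q0 is the fixed number used when r = n.\<close>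
definition qhat :: "nat \<Rightarrow> real \<Rightarrow> real \<Rightarrow> real" where
  "qhat n r q0 = (if r < real n then real n / (real n - r + 1) else if r = real n then q0 else r)"

definition Lagr :: "real \<Rightarrow> real \<Rightarrow> 'a::euclidean_space \<Rightarrow> ennreal" where
  "Lagr r m w = (if m > 0 then ennreal (norm w powr r * m powr (1 - r))
                 else if w = 0 then 0 else \<infinity>)"

definition kin :: "real \<Rightarrow> ('a::euclidean_space \<Rightarrow> real) \<Rightarrow> ('a \<Rightarrow> 'a) \<Rightarrow> ennreal" where
  "kin r m w = (\<integral>\<^sup>+x. Lagr r (m x) (w x) \<partial>lebesgue)"

definition admissible :: "real \<Rightarrow> real \<Rightarrow> real \<Rightarrow> ('a::euclidean_space \<Rightarrow> real) \<Rightarrow> ('a \<Rightarrow> 'a) \<Rightarrow> bool" where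
  "admissible r q0 b m w \<longleftrightarrow>
     Lp 1 m \<and> W1p (qhat DIM('a) r q0) m \<and> Lp 1 w \<and>
     (\<exists>g. weak_grad m g \<and> Lp (qhat DIM('a) r q0) g \<and>
        (\<forall>\<phi>. test_fun \<phi> \<longrightarrow>
           (\<integral>x. g x \<bullet> grad \<phi> x \<partial>lebesgue) = (\<integral>x. w x \<bullet> grad \<phi> x \<partial>lebesgue))) \<and>
     integrable lebesgue (\<lambda>x. norm x powr b * m x) \<and>
     (\<forall>x. 0 \<le> m x) \<and> \<not> (AE x in lebesgue. m x = 0)"

definition admissible_M :: "real \<Rightarrow> real \<Rightarrow> real \<Rightarrow> real \<Rightarrow> ('a::euclidean_space \<Rightarrow> real) \<Rightarrow> ('a \<Rightarrow> 'a) \<Rightarrow> bool" where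
  "admissible_M r q0 b M m w \<longleftrightarrow> admissible r q0 b m w \<and> (\<integral>x. m x \<partial>lebesgue) = M"

definition E0 :: "real \<Rightarrow> real \<Rightarrow> real \<Rightarrow> ('a::euclidean_space \<Rightarrow> real) \<Rightarrow> ('a \<Rightarrow> 'a) \<Rightarrow> ereal" where
  "E0 r' CH \<alpha> m w = ereal (C_L r' CH) * enn2ereal (kin (conj_exp r') m w)
      - enn2ereal (\<integral>\<^sup>+x. ennreal (m x powr (\<alpha> + 1)) \<partial>lebesgue) / ereal (\<alpha> + 1)"

definition e0 :: "'a::euclidean_space itself \<Rightarrow> real \<Rightarrow> real \<Rightarrow> real \<Rightarrow> real \<Rightarrow> real \<Rightarrow> real \<Rightarrow> ereal" where
  "e0 _ r' CH q0 b \<alpha> M = (INF mw \<in> {(m :: 'a \<Rightarrow> real, w). admissible_M (conj_exp r') q0 b M m w}.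
                           E0 r' CH \<alpha> (fst mw) (snd mw))"

definition GN_quot :: "real \<Rightarrow> real \<Rightarrow> real \<Rightarrow> ('a::euclidean_space \<Rightarrow> real) \<Rightarrow> ('a \<Rightarrow> 'a) \<Rightarrow> ereal" where
  "GN_quot r' CH \<alpha> m w =
     (let r = conj_exp r'; n = real DIM('a) in
      if kin r m w = \<infinity> then \<infinity>
      else ereal ((C_L r' CH * enn2real (kin r m w)) powr (n * \<alpha> / r)
                  * (\<integral>x. m x \<partial>lebesgue) powr (((\<alpha> + 1) * r - n * \<alpha>) / r)
                  / enn2real (\<integral>\<^sup>+x. ennreal (m x powr (\<alpha> + 1)) \<partial>lebesgue)))"

definition Gamma :: "'a::euclidean_space itself \<Rightarrow> real \<Rightarrow> real \<Rightarrow> real \<Rightarrow> real \<Rightarrow> real \<Rightarrow> ereal" where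
  "Gamma _ r' CH q0 b \<alpha> = (INF mw \<in> {(m :: 'a \<Rightarrow> real, w). admissible (conj_exp r') q0 b m w}.
                           GN_quot r' CH \<alpha> (fst mw) (snd mw))"

end

theory Submission
  imports Defs
begin

lemma lebesgue_scale:
  fixes c :: real assumes c: "c > 0"
  shows "(lebesgue :: 'a::euclidean_space measure) =
     density (distr lebesgue lebesgue (\<lambda>x. c *\<^sub>R x)) (\<lambda>_. ennreal (c ^ DIM('a)))"
proof -
  have eq: "(\<lambda>x::'a. 0 + (\<Sum>j\<in>Basis. (c * (x \<bullet> j)) *\<^sub>R j)) = (\<lambda>x. c *\<^sub>R x)"
    unfolding scaleR_scaleR[symmetric] scaleR_sum_right[symmetric] euclidean_representation by simp
  have p: "(\<Prod>j\<in>(Basis::'a set). \<bar>c\<bar>) = c ^ DIM('a)"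
    using c by (simp add: prod_constant)
  have "(lebesgue :: 'a measure) = density (distr lebesgue lebesgue (\<lambda>x::'a. 0 + (\<Sum>j\<in>Basis. (c * (x \<bullet> j)) *\<^sub>R j))) (\<lambda>_. ennreal (\<Prod>j\<in>(Basis::'a set). \<bar>c\<bar>))"
    by (rule lebesgue_affine_euclidean) (use c in auto)
  then show ?thesis unfolding eq p .
qed

lemma scale_meas: "c \<noteq> 0 \<Longrightarrow> (\<lambda>x::'a::euclidean_space. c *\<^sub>R x) \<in> lebesgue \<rightarrow>\<^sub>M lebesgue"
  using lebesgue_measurable_scaling[of c] by simp

lemma meas_scale:
  fixes f :: "'a::euclidean_space \<Rightarrow> 'b::{second_countable_topology, topological_space}"
  assumes "f \<in> borel_measurable lebesgue"
  shows "(\<lambda>x. f (c *\<^sub>R x)) \<in> borel_measurable lebesgue"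
  using measurable_compose[OF lebesgue_measurable_scaling[of c] assms] by (simp add: o_def)

lemma meas_scale_iff:
  fixes f :: "'a::euclidean_space \<Rightarrow> 'b::{second_countable_topology, topological_space}"
  assumes c: "c \<noteq> 0"
  shows "(\<lambda>x. f (c *\<^sub>R x)) \<in> borel_measurable lebesgue \<longleftrightarrow> f \<in> borel_measurable lebesgue"
proof
  assume "(\<lambda>x. f (c *\<^sub>R x)) \<in> borel_measurable lebesgue"
  from meas_scale[OF this, of "1/c"] c show "f \<in> borel_measurable lebesgue" by simp
qed (rule meas_scale)

lemma nn_integral_scale:
  fixes f :: "'a::euclidean_space \<Rightarrow> ennreal"
  assumes f[measurable]: "f \<in> borel_measurable lebesgue" and c: "c > 0"
  shows "(\<integral>\<^sup>+x. f x \<partial>lebesgue) = ennreal (c ^ DIM('a)) * (\<integral>\<^sup>+x. f (c *\<^sub>R x) \<partial>lebesgue)"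
proof -
  have m[measurable]: "(\<lambda>x::'a. c *\<^sub>R x) \<in> lebesgue \<rightarrow>\<^sub>M lebesgue" using scale_meas c by simp
  have "(\<integral>\<^sup>+x. f x \<partial>lebesgue) = (\<integral>\<^sup>+x. f x \<partial>density (distr lebesgue lebesgue (\<lambda>x. c *\<^sub>R x)) (\<lambda>_. ennreal (c ^ DIM('a))))"
    using lebesgue_scale[OF c] by metis
  also have "\<dots> = \<integral>\<^sup>+ x. ennreal (c ^ DIM('a)) * f x \<partial>distr lebesgue lebesgue (\<lambda>x. c *\<^sub>R x)"
    by (subst nn_integral_density) auto
  also have "\<dots> = ennreal (c ^ DIM('a)) * integral\<^sup>N (distr lebesgue lebesgue (\<lambda>x. c *\<^sub>R x)) f"
    by (rule nn_integral_cmult) (simp)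
  also have "\<dots> = ennreal (c ^ DIM('a)) * (\<integral>\<^sup>+x. f (c *\<^sub>R x) \<partial>lebesgue)"
    by (subst nn_integral_distr) auto
  finally show ?thesis .
qed

lemma integrable_scale:
  fixes f :: "'a::euclidean_space \<Rightarrow> 'b::{banach, second_countable_topology}"
  assumes f: "integrable lebesgue f" and c: "c > 0"
  shows "integrable lebesgue (\<lambda>x. f (c *\<^sub>R x))"
proof -
  have fm[measurable]: "f \<in> borel_measurable lebesgue" using f by auto
  have gm: "(\<lambda>x. f (c *\<^sub>R x)) \<in> borel_measurable lebesgue" by (rule meas_scale[OF fm])
  have nm: "(\<lambda>x. ennreal (norm (f x))) \<in> borel_measurable lebesgue" by measurable
  have "(\<integral>\<^sup>+x. ennreal (norm (f x)) \<partial>lebesgue) < \<infinity>" using f by (simp add: integrable_iff_bounded)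
  then have "ennreal (c ^ DIM('a)) * (\<integral>\<^sup>+x. ennreal (norm (f (c *\<^sub>R x))) \<partial>lebesgue) < \<infinity>"
    using nn_integral_scale[OF nm c] by simp
  then have "(\<integral>\<^sup>+x. ennreal (norm (f (c *\<^sub>R x))) \<partial>lebesgue) < \<infinity>"
    using c by (auto simp: ennreal_mult_less_top)
  then show ?thesis using gm by (simp add: integrable_iff_bounded)
qed

lemma integrable_scale_iff:
  fixes f :: "'a::euclidean_space \<Rightarrow> 'b::{banach, second_countable_topology}"
  assumes c: "c > 0"
  shows "integrable lebesgue (\<lambda>x. f (c *\<^sub>R x)) \<longleftrightarrow> integrable lebesgue f"
proof
  assume "integrable lebesgue (\<lambda>x. f (c *\<^sub>R x))"
  from integrable_scale[OF this, of "1/c"] c show "integrable lebesgue f" by simp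
qed (rule integrable_scale[OF _ c])

lemma integral_scale:
  fixes f :: "'a::euclidean_space \<Rightarrow> 'b::{banach, second_countable_topology}"
  assumes c: "c > 0"
  shows "(\<integral>x. f x \<partial>lebesgue) = (c ^ DIM('a)) *\<^sub>R (\<integral>x. f (c *\<^sub>R x) \<partial>lebesgue)"
proof (cases "integrable lebesgue f")
  case True
  then have fm[measurable]: "f \<in> borel_measurable lebesgue" by auto
  have m[measurable]: "(\<lambda>x::'a. c *\<^sub>R x) \<in> lebesgue \<rightarrow>\<^sub>M lebesgue" using scale_meas c by simp
  have "(\<integral>x. f x \<partial>lebesgue) = (\<integral>x. f x \<partial>density (distr lebesgue lebesgue (\<lambda>x. c *\<^sub>R x)) (\<lambda>_. ennreal (c ^ DIM('a))))"
    using lebesgue_scale[OF c] by metis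
  also have "\<dots> = (\<integral>x. (c ^ DIM('a)) *\<^sub>R f x \<partial>distr lebesgue lebesgue (\<lambda>x. c *\<^sub>R x))"
    using c by (subst integral_density) auto
  also have "\<dots> = (\<integral>x. (c ^ DIM('a)) *\<^sub>R f (c *\<^sub>R x) \<partial>lebesgue)"
    by (subst integral_distr) auto
  also have "\<dots> = (c ^ DIM('a)) *\<^sub>R (\<integral>x. f (c *\<^sub>R x) \<partial>lebesgue)"
    by simp
  finally show ?thesis .
next
  case False
  then have "\<not> integrable lebesgue (\<lambda>x. f (c *\<^sub>R x))" using integrable_scale_iff[OF c] by blast
  with False show ?thesis by (simp add: not_integrable_integral_eq)
qed


lemma pd_has_derivative:
  assumes "(F has_derivative F') (at x)"
  shows "pd i F x = F' i"
  using frechet_derivative_at[OF assms] by (simp add: pd_def)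

lemma hasderiv_scale:
  fixes F :: "'a::euclidean_space \<Rightarrow> real"
  assumes "(F has_derivative F') (at (c *\<^sub>R y))"
  shows "((\<lambda>y. k * F (c *\<^sub>R y)) has_derivative (\<lambda>h. k * F' (c *\<^sub>R h))) (at y)"
proof -
  have d1: "((\<lambda>y::'a. c *\<^sub>R y) has_derivative (\<lambda>h. c *\<^sub>R h)) (at y)"
    by (intro derivative_eq_intros) auto
  have "((\<lambda>y. F (c *\<^sub>R y)) has_derivative (\<lambda>h. F' (c *\<^sub>R h))) (at y)"
    using has_derivative_compose[OF d1 assms] by simp
  then show ?thesis by (rule has_derivative_mult_right)
qed

lemma pd_scale:
  fixes F :: "'a::euclidean_space \<Rightarrow> real"
  assumes "F differentiable at (c *\<^sub>R y)"
  shows "pd i (\<lambda>y. k * F (c *\<^sub>R y)) y = k * c * pd i F (c *\<^sub>R y)"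
    and "(\<lambda>y. k * F (c *\<^sub>R y)) differentiable at y"
proof -
  obtain F' where F': "(F has_derivative F') (at (c *\<^sub>R y))"
    using assms by (auto simp: differentiable_def)
  have bl: "bounded_linear F'" using F' by (rule has_derivative_bounded_linear)
  have h: "((\<lambda>y. k * F (c *\<^sub>R y)) has_derivative (\<lambda>h. k * F' (c *\<^sub>R h))) (at y)"
    by (rule hasderiv_scale[OF F'])
  show "pd i (\<lambda>y. k * F (c *\<^sub>R y)) y = k * c * pd i F (c *\<^sub>R y)"
  proof -
    have lin: "F' (c *\<^sub>R i) = c * F' i" using bounded_linear.linear[OF bl] by (simp add: linear_iff)
    show ?thesis using pd_has_derivative[OF h] pd_has_derivative[OF F'] lin by simp
  qed
  show "(\<lambda>y. k * F (c *\<^sub>R y)) differentiable at y"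
    using h by (auto simp: differentiable_def)
qed

lemma pderivs_scale:
  fixes F :: "'a::euclidean_space \<Rightarrow> real"
  assumes "smooth_fun F"
  shows "set is \<subseteq> Basis \<Longrightarrow> pderivs is (\<lambda>y. F (c *\<^sub>R y)) = (\<lambda>y. c ^ length is * pderivs is F (c *\<^sub>R y))"
proof (induction "is")
  case Nil
  then show ?case by simp
next
  case (Cons i "is")
  then have IH: "pderivs is (\<lambda>y. F (c *\<^sub>R y)) = (\<lambda>y. c ^ length is * pderivs is F (c *\<^sub>R y))" by simp
  have d: "\<And>x. pderivs is F differentiable at x" using assms Cons.prems by (auto simp: smooth_fun_def)
  show ?case
    using pd_scale(1)[OF d, of i "c ^ length is"]
    by (simp add: IH fun_eq_iff)
qed

lemma smooth_scale:
  fixes F :: "'a::euclidean_space \<Rightarrow> real"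
  assumes "smooth_fun F"
  shows "smooth_fun (\<lambda>y. F (c *\<^sub>R y))"
  unfolding smooth_fun_def
proof (intro allI impI)
  fix "is" :: "'a list" and x assume s: "set is \<subseteq> Basis"
  have d: "\<And>x. pderivs is F differentiable at x" using assms s by (auto simp: smooth_fun_def)
  show "pderivs is (\<lambda>y. F (c *\<^sub>R y)) differentiable at x"
    unfolding pderivs_scale[OF assms s, of c] by (rule pd_scale(2)[OF d])
qed

lemma test_scale:
  fixes F :: "'a::euclidean_space \<Rightarrow> real"
  assumes "test_fun F" and c: "c \<noteq> 0"
  shows "test_fun (\<lambda>y. F (c *\<^sub>R y))"
proof -
  have "{y. F (c *\<^sub>R y) \<noteq> 0} \<subseteq> (\<lambda>x. (1/c) *\<^sub>R x) ` {x. F x \<noteq> 0}"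
  proof
    fix y assume "y \<in> {y. F (c *\<^sub>R y) \<noteq> 0}"
    then show "y \<in> (\<lambda>x. (1/c) *\<^sub>R x) ` {x. F x \<noteq> 0}"
      using c by (intro image_eqI[of _ _ "c *\<^sub>R y"]) auto
  qed
  moreover have "bounded ((\<lambda>x. (1/c) *\<^sub>R x) ` {x. F x \<noteq> 0})"
    using assms by (intro bounded_scaling) (auto simp: test_fun_def)
  ultimately show ?thesis
    using assms smooth_scale by (auto simp: test_fun_def intro: bounded_subset)
qed

lemma pd_scale_smooth:
  fixes F :: "'a::euclidean_space \<Rightarrow> real"
  assumes "smooth_fun F"
  shows "pd i (\<lambda>y. F (c *\<^sub>R y)) y = c * pd i F (c *\<^sub>R y)"
proof -
  have d: "F differentiable at (c *\<^sub>R y)" using assms by (auto simp: smooth_fun_def dest: spec[of _ "[]"])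
  show ?thesis using pd_scale(1)[OF d, of i 1] by simp
qed

lemma grad_scale_smooth:
  fixes F :: "'a::euclidean_space \<Rightarrow> real"
  assumes "smooth_fun F"
  shows "grad (\<lambda>y. F (c *\<^sub>R y)) y = c *\<^sub>R grad F (c *\<^sub>R y)"
  unfolding grad_def using pd_scale_smooth[OF assms]
  by (simp add: scaleR_sum_right)


lemma Lp_tr:
  fixes f :: "'a::euclidean_space \<Rightarrow> 'b::{real_normed_vector, second_countable_topology}"
  assumes "Lp p f" and t: "t > 0"
  shows "Lp p (\<lambda>x. c *\<^sub>R f (t *\<^sub>R x))"
proof -
  have fm: "f \<in> borel_measurable lebesgue" and fi: "integrable lebesgue (\<lambda>x. norm (f x) powr p)"
    using assms by (auto simp: Lp_def)
  have "integrable lebesgue (\<lambda>x. norm (f (t *\<^sub>R x)) powr p)"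
    using integrable_scale[OF fi t] by simp
  then have "integrable lebesgue (\<lambda>x. \<bar>c\<bar> powr p * norm (f (t *\<^sub>R x)) powr p)"
    by (rule integrable_mult_right)
  moreover have "(\<lambda>x. \<bar>c\<bar> powr p * norm (f (t *\<^sub>R x)) powr p) = (\<lambda>x. norm (c *\<^sub>R f (t *\<^sub>R x)) powr p)"
    by (simp add: powr_mult)
  moreover have "(\<lambda>x. c *\<^sub>R f (t *\<^sub>R x)) \<in> borel_measurable lebesgue"
    using meas_scale[OF fm, of t] by measurable
  ultimately show ?thesis unfolding Lp_def by metis
qed

lemma Lp_tr_real:
  fixes f :: "'a::euclidean_space \<Rightarrow> real"
  assumes "Lp p f" and t: "t > 0"
  shows "Lp p (\<lambda>x. c * f (t *\<^sub>R x))"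
  using Lp_tr[OF assms, of c] by simp

lemma indicator_scale:
  fixes x :: "'a::real_vector"
  assumes "t \<noteq> 0"
  shows "indicator K x = (indicator ((\<lambda>y. t *\<^sub>R y) ` K) (t *\<^sub>R x) :: real)"
proof -
  have "(t *\<^sub>R x \<in> (\<lambda>y. t *\<^sub>R y) ` K) = (x \<in> K)"
  proof
    assume "t *\<^sub>R x \<in> (\<lambda>y. t *\<^sub>R y) ` K"
    then obtain y where y: "y \<in> K" "t *\<^sub>R x = t *\<^sub>R y" by auto
    then have "x = y" using assms by simp
    then show "x \<in> K" using y by simp
  qed auto
  then show ?thesis by (simp add: indicator_def)
qed

lemma locint_tr:
  fixes f :: "'a::euclidean_space \<Rightarrow> 'b::{real_normed_vector, second_countable_topology}"
  assumes "locint f" and t: "t > 0"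
  shows "locint (\<lambda>x. c *\<^sub>R f (t *\<^sub>R x))"
  unfolding locint_def
proof (intro conjI allI impI)
  have fm: "f \<in> borel_measurable lebesgue" using assms by (auto simp: locint_def)
  show "(\<lambda>x. c *\<^sub>R f (t *\<^sub>R x)) \<in> borel_measurable lebesgue"
    using meas_scale[OF fm, of t] by measurable
  fix K :: "'a set" assume K: "compact K"
  have "compact ((\<lambda>y. t *\<^sub>R y) ` K)" using K by (rule compact_scaling)
  then have "integrable lebesgue (\<lambda>x. indicator ((\<lambda>y. t *\<^sub>R y) ` K) x * norm (f x))"
    using assms by (auto simp: locint_def)
  from integrable_scale[OF this t]
  have "integrable lebesgue (\<lambda>x. indicator K x * norm (f (t *\<^sub>R x)))"
    using t by (simp add: indicator_scale[of t K])
  then have "integrable lebesgue (\<lambda>x. \<bar>c\<bar> * (indicator K x * norm (f (t *\<^sub>R x))))"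
    by (rule integrable_mult_right)
  then show "integrable lebesgue (\<lambda>x. indicator K x * norm (c *\<^sub>R f (t *\<^sub>R x)))"
    by (simp add: ac_simps)
qed

lemma locint_tr_real:
  fixes f :: "'a::euclidean_space \<Rightarrow> real"
  assumes "locint f" and t: "t > 0"
  shows "locint (\<lambda>x. c * f (t *\<^sub>R x))"
  using locint_tr[OF assms, of c] by simp

lemma integral_tr:
  fixes h :: "'a::euclidean_space \<Rightarrow> real"
  assumes t: "t > 0"
  shows "(\<integral>x. h (t *\<^sub>R x) \<partial>lebesgue) = (\<integral>x. h x \<partial>lebesgue) / t ^ DIM('a)"
  using integral_scale[OF t, of h] t by simp

lemma weak_grad_tr:
  fixes m :: "'a::euclidean_space \<Rightarrow> real"
  assumes wg: "weak_grad m g" and t: "t > 0"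
  shows "weak_grad (\<lambda>x. c * m (t *\<^sub>R x)) (\<lambda>x. (c * t) *\<^sub>R g (t *\<^sub>R x))"
  unfolding weak_grad_def
proof (intro conjI allI impI ballI)
  show "locint (\<lambda>x. c * m (t *\<^sub>R x))" using wg t by (intro locint_tr_real) (auto simp: weak_grad_def)
  show "locint (\<lambda>x. (c * t) *\<^sub>R g (t *\<^sub>R x))" using wg t by (intro locint_tr) (auto simp: weak_grad_def)
  fix \<phi> :: "'a \<Rightarrow> real" and i :: 'a assume \<phi>: "test_fun \<phi>" and i: "i \<in> Basis"
  define \<psi> where "\<psi> = (\<lambda>y. \<phi> ((1/t) *\<^sub>R y))"
  have \<psi>: "test_fun \<psi>" unfolding \<psi>_def using t by (intro test_scale[OF \<phi>]) auto
  have phi_eq: "\<phi> = (\<lambda>x. \<psi> (t *\<^sub>R x))" using t by (simp add: \<psi>_def)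
  have sm: "smooth_fun \<psi>" using \<psi> by (simp add: test_fun_def)
  have pdphi: "pd i \<phi> x = t * pd i \<psi> (t *\<^sub>R x)" for x
    unfolding phi_eq by (rule pd_scale_smooth[OF sm])
  have "(\<integral>x. c * m (t *\<^sub>R x) * pd i \<phi> x \<partial>lebesgue) = (\<integral>x. c * t * (m (t *\<^sub>R x) * pd i \<psi> (t *\<^sub>R x)) \<partial>lebesgue)"
    by (simp add: pdphi ac_simps)
  also have "\<dots> = c * t * ((\<integral>x. m x * pd i \<psi> x \<partial>lebesgue) / t ^ DIM('a))"
    using integral_tr[OF t, of "\<lambda>x. m x * pd i \<psi> x"] by simp
  also have "\<dots> = c * t * ((- (\<integral>x. (g x \<bullet> i) * \<psi> x \<partial>lebesgue)) / t ^ DIM('a))"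
    using wg \<psi> i by (simp add: weak_grad_def)
  also have "\<dots> = - (\<integral>x. c * t * ((g (t *\<^sub>R x) \<bullet> i) * \<psi> (t *\<^sub>R x)) \<partial>lebesgue)"
    using integral_tr[OF t, of "\<lambda>x. (g x \<bullet> i) * \<psi> x"] by simp
  also have "\<dots> = - (\<integral>x. ((c * t) *\<^sub>R g (t *\<^sub>R x) \<bullet> i) * \<phi> x \<partial>lebesgue)"
    by (simp add: phi_eq ac_simps)
  finally show "(\<integral>x. c * m (t *\<^sub>R x) * pd i \<phi> x \<partial>lebesgue) = - (\<integral>x. ((c * t) *\<^sub>R g (t *\<^sub>R x) \<bullet> i) * \<phi> x \<partial>lebesgue)" .
qed

lemma grad_int_tr:
  fixes g :: "'a::euclidean_space \<Rightarrow> 'a"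
  assumes \<phi>: "test_fun \<phi>" and t: "t > 0"
  defines "\<psi> \<equiv> (\<lambda>y. \<phi> ((1/t) *\<^sub>R y))"
  shows "(\<integral>x. (c * t) *\<^sub>R g (t *\<^sub>R x) \<bullet> grad \<phi> x \<partial>lebesgue) = c * t * t * (\<integral>x. g x \<bullet> grad \<psi> x \<partial>lebesgue) / t ^ DIM('a)"
    and "test_fun \<psi>"
proof -
  show \<psi>: "test_fun \<psi>" unfolding \<psi>_def using t by (intro test_scale[OF \<phi>]) auto
  have phi_eq: "\<phi> = (\<lambda>x. \<psi> (t *\<^sub>R x))" using t by (simp add: \<psi>_def)
  have sm: "smooth_fun \<psi>" using \<psi> by (simp add: test_fun_def)
  have gr: "grad \<phi> x = t *\<^sub>R grad \<psi> (t *\<^sub>R x)" for x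
    unfolding phi_eq by (rule grad_scale_smooth[OF sm])
  have "(\<integral>x. (c * t) *\<^sub>R g (t *\<^sub>R x) \<bullet> grad \<phi> x \<partial>lebesgue) = (\<integral>x. c * t * t * (g (t *\<^sub>R x) \<bullet> grad \<psi> (t *\<^sub>R x)) \<partial>lebesgue)"
    by (simp add: gr ac_simps)
  also have "\<dots> = c * t * t * (\<integral>x. g x \<bullet> grad \<psi> x \<partial>lebesgue) / t ^ DIM('a)"
    using integral_tr[OF t, of "\<lambda>x. g x \<bullet> grad \<psi> x"] by simp
  finally show "(\<integral>x. (c * t) *\<^sub>R g (t *\<^sub>R x) \<bullet> grad \<phi> x \<partial>lebesgue) = c * t * t * (\<integral>x. g x \<bullet> grad \<psi> x \<partial>lebesgue) / t ^ DIM('a)" .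
qed


lemma Lagr_meas:
  fixes m :: "'a::euclidean_space \<Rightarrow> real" and w :: "'a \<Rightarrow> 'a"
  assumes [measurable]: "m \<in> borel_measurable lebesgue" "w \<in> borel_measurable lebesgue"
  shows "(\<lambda>x. Lagr r (m x) (w x)) \<in> borel_measurable lebesgue"
  unfolding Lagr_def by measurable

lemma nn_integral_tr:
  fixes f :: "'a::euclidean_space \<Rightarrow> ennreal"
  assumes f: "f \<in> borel_measurable lebesgue" and t: "t > 0"
  shows "(\<integral>\<^sup>+x. f (t *\<^sub>R x) \<partial>lebesgue) = ennreal (1 / t ^ DIM('a)) * (\<integral>\<^sup>+x. f x \<partial>lebesgue)"
proof -
  have "ennreal (1 / t ^ DIM('a)) * (\<integral>\<^sup>+x. f x \<partial>lebesgue)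
      = ennreal (1 / t ^ DIM('a)) * ennreal (t ^ DIM('a)) * (\<integral>\<^sup>+x. f (t *\<^sub>R x) \<partial>lebesgue)"
    using nn_integral_scale[OF f t] by (simp add: mult.assoc)
  also have "ennreal (1 / t ^ DIM('a)) * ennreal (t ^ DIM('a)) = 1"
    using t by (simp flip: ennreal_mult)
  finally show ?thesis by simp
qed

lemma Lagr_tr:
  fixes v :: "'a::euclidean_space"
  assumes c: "c > 0" and t: "t > 0"
  shows "Lagr r (c * a) ((c * t) *\<^sub>R v) = ennreal (c * t powr r) * Lagr r a v"
proof (cases "a > 0")
  case True
  then have ca: "c * a > 0" using c by simp
  have "norm ((c * t) *\<^sub>R v) powr r * (c * a) powr (1 - r)
      = (c powr r * c powr (1 - r)) * t powr r * (norm v powr r * a powr (1 - r))"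
    using c t True by (simp add: powr_mult abs_of_pos)
  also have "c powr r * c powr (1 - r) = c"
    using c by (simp flip: powr_add)
  finally have eq: "norm ((c * t) *\<^sub>R v) powr r * (c * a) powr (1 - r) = (c * t powr r) * (norm v powr r * a powr (1 - r))" .
  show ?thesis using True ca c t unfolding Lagr_def eq
    by (simp add: ennreal_mult)
next
  case False
  then have ca: "\<not> c * a > 0" using c by (simp add: zero_less_mult_iff)
  have ne: "ennreal (c * t powr r) \<noteq> 0" using c t by simp
  show ?thesis using False ca c t ne unfolding Lagr_def
    by (auto simp: ennreal_mult_top)
qed

lemma kin_tr:
  fixes m :: "'a::euclidean_space \<Rightarrow> real" and w :: "'a \<Rightarrow> 'a"
  assumes [measurable]: "m \<in> borel_measurable lebesgue" "w \<in> borel_measurable lebesgue"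
    and c: "c > 0" and t: "t > 0"
  shows "kin r (\<lambda>x. c * m (t *\<^sub>R x)) (\<lambda>x. (c * t) *\<^sub>R w (t *\<^sub>R x))
       = ennreal (c * t powr r / t ^ DIM('a)) * kin r m w"
proof -
  have L: "(\<lambda>x. Lagr r (m x) (w x)) \<in> borel_measurable lebesgue" by (rule Lagr_meas) auto
  have "kin r (\<lambda>x. c * m (t *\<^sub>R x)) (\<lambda>x. (c * t) *\<^sub>R w (t *\<^sub>R x))
      = (\<integral>\<^sup>+x. ennreal (c * t powr r) * Lagr r (m (t *\<^sub>R x)) (w (t *\<^sub>R x)) \<partial>lebesgue)"
    unfolding kin_def by (simp add: Lagr_tr[OF c t])
  also have "\<dots> = ennreal (c * t powr r) * (\<integral>\<^sup>+x. Lagr r (m (t *\<^sub>R x)) (w (t *\<^sub>R x)) \<partial>lebesgue)"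
    by (rule nn_integral_cmult) (rule meas_scale[OF L])
  also have "\<dots> = ennreal (c * t powr r) * (ennreal (1 / t ^ DIM('a)) * kin r m w)"
    unfolding kin_def using nn_integral_tr[OF L t] by simp
  also have "\<dots> = ennreal (c * t powr r / t ^ DIM('a)) * kin r m w"
    using c t by (simp add: mult.assoc[symmetric] divide_inverse flip: ennreal_mult)
  finally show ?thesis .
qed

lemma P_tr:
  fixes m :: "'a::euclidean_space \<Rightarrow> real"
  assumes [measurable]: "m \<in> borel_measurable lebesgue" and nn: "\<And>x. m x \<ge> 0"
    and c: "c > 0" and t: "t > 0"
  shows "(\<integral>\<^sup>+x. ennreal ((c * m (t *\<^sub>R x)) powr a) \<partial>lebesgue)
       = ennreal (c powr a / t ^ DIM('a)) * (\<integral>\<^sup>+x. ennreal (m x powr a) \<partial>lebesgue)"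
proof -
  have L: "(\<lambda>x. ennreal (m x powr a)) \<in> borel_measurable lebesgue" by measurable
  have "(\<integral>\<^sup>+x. ennreal ((c * m (t *\<^sub>R x)) powr a) \<partial>lebesgue)
      = (\<integral>\<^sup>+x. ennreal (c powr a) * ennreal (m (t *\<^sub>R x) powr a) \<partial>lebesgue)"
    using c nn by (simp add: powr_mult ennreal_mult)
  also have "\<dots> = ennreal (c powr a) * (\<integral>\<^sup>+x. ennreal (m (t *\<^sub>R x) powr a) \<partial>lebesgue)"
    by (rule nn_integral_cmult) (rule meas_scale[OF L])
  also have "\<dots> = ennreal (c powr a) * (ennreal (1 / t ^ DIM('a)) * (\<integral>\<^sup>+x. ennreal (m x powr a) \<partial>lebesgue))"
    using nn_integral_tr[OF L t] by simp
  also have "\<dots> = ennreal (c powr a / t ^ DIM('a)) * (\<integral>\<^sup>+x. ennreal (m x powr a) \<partial>lebesgue)"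
    using c t by (simp add: mult.assoc[symmetric] divide_inverse flip: ennreal_mult)
  finally show ?thesis .
qed

lemma mass_tr:
  fixes m :: "'a::euclidean_space \<Rightarrow> real"
  assumes t: "t > 0"
  shows "(\<integral>x. c * m (t *\<^sub>R x) \<partial>lebesgue) = c * (\<integral>x. m x \<partial>lebesgue) / t ^ DIM('a)"
  using integral_tr[OF t, of m] by simp

lemma notAE_tr:
  fixes m :: "'a::euclidean_space \<Rightarrow> real"
  assumes [measurable]: "m \<in> borel_measurable lebesgue" and nn: "\<And>x. m x \<ge> 0"
    and c: "c > 0" and t: "t > 0" and ne: "\<not> (AE x in lebesgue. m x = 0)"
  shows "\<not> (AE x in lebesgue. c * m (t *\<^sub>R x) = 0)"
proof
  assume A: "AE x in lebesgue. c * m (t *\<^sub>R x) = 0"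
  have L: "(\<lambda>x. ennreal (m x)) \<in> borel_measurable lebesgue" by measurable
  have AE0: "AE x in lebesgue. ennreal (m (t *\<^sub>R x)) = 0" using A by eventually_elim (use c in auto)
  have "(\<integral>\<^sup>+x. ennreal (m (t *\<^sub>R x)) \<partial>lebesgue) = 0"
    using nn_integral_0_iff_AE[OF meas_scale[OF L, of t]] AE0 by simp
  then have "(\<integral>\<^sup>+x. ennreal (m x) \<partial>lebesgue) = 0"
    using nn_integral_scale[OF L t] by simp
  then have "AE x in lebesgue. ennreal (m x) = 0"
    using nn_integral_0_iff_AE[OF L] by simp
  then have "AE x in lebesgue. m x = 0"
    using nn by (auto elim!: AE_mp intro!: AE_I2 simp: antisym)
  with ne show False by simp
qed

lemma moment_tr:
  fixes m :: "'a::euclidean_space \<Rightarrow> real"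
  assumes "integrable lebesgue (\<lambda>x. norm x powr b * m x)" and t: "t > 0"
  shows "integrable lebesgue (\<lambda>x. norm x powr b * (c * m (t *\<^sub>R x)))"
proof -
  have "integrable lebesgue (\<lambda>x. norm (t *\<^sub>R x) powr b * m (t *\<^sub>R x))"
    using integrable_scale[OF assms] by simp
  then have "integrable lebesgue (\<lambda>x. (c * t powr (- b)) * (norm (t *\<^sub>R x) powr b * m (t *\<^sub>R x)))"
    by (rule integrable_mult_right)
  moreover have "(\<lambda>x. (c * t powr (- b)) * (norm (t *\<^sub>R x) powr b * m (t *\<^sub>R x))) = (\<lambda>x. norm x powr b * (c * m (t *\<^sub>R x)))"
  proof
    fix x :: 'a
    have "norm (t *\<^sub>R x) powr b = t powr b * norm x powr b" using t by (simp add: powr_mult)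
    moreover have "t powr (- b) * t powr b = 1" using t by (simp flip: powr_add)
    ultimately show "(c * t powr (- b)) * (norm (t *\<^sub>R x) powr b * m (t *\<^sub>R x)) = norm x powr b * (c * m (t *\<^sub>R x))"
      by (simp add: algebra_simps)
  qed
  ultimately show ?thesis by metis
qed

lemma admissible_tr:
  fixes m :: "'a::euclidean_space \<Rightarrow> real" and w :: "'a \<Rightarrow> 'a"
  assumes adm: "admissible r q0 b m w" and c: "c > 0" and t: "t > 0"
  shows "admissible r q0 b (\<lambda>x. c * m (t *\<^sub>R x)) (\<lambda>x. (c * t) *\<^sub>R w (t *\<^sub>R x))"
proof -
  let ?q = "qhat DIM('a) r q0"
  from adm have L1m: "Lp 1 m" and W: "W1p ?q m" and L1w: "Lp 1 w"
    and mom: "integrable lebesgue (\<lambda>x. norm x powr b * m x)"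
    and nn: "\<And>x. 0 \<le> m x" and ne: "\<not> (AE x in lebesgue. m x = 0)"
    by (auto simp: admissible_def)
  from adm obtain g where g: "weak_grad m g" "Lp ?q g"
    "\<And>\<phi>. test_fun \<phi> \<Longrightarrow> (\<integral>x. g x \<bullet> grad \<phi> x \<partial>lebesgue) = (\<integral>x. w x \<bullet> grad \<phi> x \<partial>lebesgue)"
    unfolding admissible_def by blast
  from W obtain g2 where g2: "weak_grad m g2" "Lp ?q g2" and Lqm: "Lp ?q m"
    by (auto simp: W1p_def)
  have mm: "m \<in> borel_measurable lebesgue" using L1m by (simp add: Lp_def)
  show ?thesis
    unfolding admissible_def
  proof (intro conjI allI)
    show "Lp 1 (\<lambda>x. c * m (t *\<^sub>R x))" by (rule Lp_tr_real[OF L1m t])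
    show "W1p ?q (\<lambda>x. c * m (t *\<^sub>R x))"
      unfolding W1p_def using Lp_tr_real[OF Lqm t] weak_grad_tr[OF g2(1) t] Lp_tr[OF g2(2) t] by blast
    show "Lp 1 (\<lambda>x. (c * t) *\<^sub>R w (t *\<^sub>R x))" by (rule Lp_tr[OF L1w t])
    show "integrable lebesgue (\<lambda>x. norm x powr b * (c * m (t *\<^sub>R x)))" by (rule moment_tr[OF mom t])
    show "0 \<le> c * m (t *\<^sub>R x)" for x using c nn by simp
    show "\<not> (AE x in lebesgue. c * m (t *\<^sub>R x) = 0)" by (rule notAE_tr[OF mm nn c t ne])
    show "\<exists>g. weak_grad (\<lambda>x. c * m (t *\<^sub>R x)) g \<and> Lp ?q g \<and>
        (\<forall>\<phi>. test_fun \<phi> \<longrightarrow> (\<integral>x. g x \<bullet> grad \<phi> x \<partial>lebesgue) = (\<integral>x. (c * t) *\<^sub>R w (t *\<^sub>R x) \<bullet> grad \<phi> x \<partial>lebesgue))"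
    proof (intro exI conjI allI impI)
      show "weak_grad (\<lambda>x. c * m (t *\<^sub>R x)) (\<lambda>x. (c * t) *\<^sub>R g (t *\<^sub>R x))" by (rule weak_grad_tr[OF g(1) t])
      show "Lp ?q (\<lambda>x. (c * t) *\<^sub>R g (t *\<^sub>R x))" by (rule Lp_tr[OF g(2) t])
      fix \<phi> :: "'a \<Rightarrow> real" assume \<phi>: "test_fun \<phi>"
      show "(\<integral>x. (c * t) *\<^sub>R g (t *\<^sub>R x) \<bullet> grad \<phi> x \<partial>lebesgue) = (\<integral>x. (c * t) *\<^sub>R w (t *\<^sub>R x) \<bullet> grad \<phi> x \<partial>lebesgue)"
        unfolding grad_int_tr(1)[OF \<phi> t] using g(3)[OF grad_int_tr(2)[OF \<phi> t]] by simp
    qed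
  qed
qed


lemma cont_meas:
  fixes f :: "'a::euclidean_space \<Rightarrow> 'b::{second_countable_topology, topological_space}"
  assumes "continuous_on UNIV f"
  shows "f \<in> borel_measurable lebesgue"
  by (rule measurable_completion) (simp add: borel_measurable_continuous_onI[OF assms])

lemma cont_supp_int:
  fixes f :: "'a::euclidean_space \<Rightarrow> real"
  assumes c: "continuous_on UNIV f" and s: "\<And>x. norm x > R \<Longrightarrow> f x = 0"
  shows "integrable lebesgue f"
proof -
  obtain a :: 'a where sub: "cball 0 R \<subseteq> cbox (- a) a"
    using bounded_subset_cbox_symmetric[of "cball (0::'a) R"] by auto
  have "f absolutely_integrable_on cbox (- a) a"
    by (rule absolutely_integrable_continuous) (rule continuous_on_subset[OF c], simp)
  then have "integrable lebesgue (\<lambda>x. indicator (cbox (- a) a) x *\<^sub>R f x)"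
    by (simp add: set_integrable_def)
  moreover have "(\<lambda>x. indicator (cbox (- a) a) x *\<^sub>R f x) = f"
  proof
    fix x
    show "indicator (cbox (- a) a) x *\<^sub>R f x = f x"
    proof (cases "x \<in> cbox (- a) a")
      case False
      then have "x \<notin> cball 0 R" using sub by auto
      then have "norm x > R" by (simp add: dist_norm)
      then show ?thesis using s by simp
    qed simp
  qed
  ultimately show ?thesis by simp
qed

lemma lebesgue_translate:
  fixes t :: "'a::euclidean_space"
  shows "lebesgue = distr lebesgue lebesgue (\<lambda>x. t + x)"
proof -
  have eq: "(\<lambda>x::'a. t + (\<Sum>j\<in>Basis. (1 * (x \<bullet> j)) *\<^sub>R j)) = (\<lambda>x. t + x)"
    unfolding mult_1 euclidean_representation ..
  have "(lebesgue :: 'a measure) = density (distr lebesgue lebesgue (\<lambda>x::'a. t + (\<Sum>j\<in>Basis. (1 * (x \<bullet> j)) *\<^sub>R j))) (\<lambda>_. ennreal (\<Prod>j\<in>(Basis::'a set). \<bar>1::real\<bar>))"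
    by (rule lebesgue_affine_euclidean) auto
  then show ?thesis unfolding eq by (simp add: density_1)
qed

lemma integral_translate:
  fixes f :: "'a::euclidean_space \<Rightarrow> real"
  assumes f: "f \<in> borel_measurable lebesgue"
  shows "(\<integral>x. f (t + x) \<partial>lebesgue) = (\<integral>x. f x \<partial>lebesgue)"
proof -
  have m: "(\<lambda>x::'a. t + x) \<in> lebesgue \<rightarrow>\<^sub>M lebesgue"
    using lebesgue_affine_measurable[of "\<lambda>_::'a. 1" t] unfolding mult_1 euclidean_representation by simp
  have "(\<integral>x. f x \<partial>lebesgue) = (\<integral>x. f x \<partial>distr lebesgue lebesgue (\<lambda>x. t + x))"
    using lebesgue_translate[of t] by metis
  also have "\<dots> = (\<integral>x. f (t + x) \<partial>lebesgue)"
    by (rule integral_distr[OF m f])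
  finally show ?thesis by simp
qed

lemma line_deriv:
  fixes F :: "'a::euclidean_space \<Rightarrow> real"
  assumes der: "\<And>x. (F has_derivative F' x) (at x)"
  shows "((\<lambda>t. F (x + t *\<^sub>R i)) has_real_derivative F' (x + t *\<^sub>R i) i) (at t)"
proof -
  have d1: "((\<lambda>t. x + t *\<^sub>R i) has_derivative (\<lambda>h. h *\<^sub>R i)) (at t)"
    by (intro derivative_eq_intros) auto
  have "((\<lambda>t. F (x + t *\<^sub>R i)) has_derivative (\<lambda>h. F' (x + t *\<^sub>R i) (h *\<^sub>R i))) (at t)"
    using has_derivative_compose[OF d1 der] by simp
  moreover have "(\<lambda>h. F' (x + t *\<^sub>R i) (h *\<^sub>R i)) = (\<lambda>h. F' (x + t *\<^sub>R i) i * h)"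
  proof -
    have bl: "bounded_linear (F' (x + t *\<^sub>R i))" using der by (rule has_derivative_bounded_linear)
    show ?thesis using bounded_linear.linear[OF bl] by (simp add: linear_iff fun_eq_iff mult.commute)
  qed
  ultimately show ?thesis by (simp add: has_field_derivative_def)
qed

lemma ibp0:
  fixes F :: "'a::euclidean_space \<Rightarrow> real"
  assumes der: "\<And>x. (F has_derivative F' x) (at x)"
    and cont: "continuous_on UNIV (\<lambda>x. F' x i)"
    and supp: "\<And>x. norm x > R \<Longrightarrow> F x = 0"
    and i: "norm i = 1"
  shows "(\<integral>x. F' x i \<partial>lebesgue) = 0"
proof -
  have Fc: "continuous_on UNIV F"
    using der by (intro continuous_at_imp_continuous_on ballI has_derivative_continuous) auto
  have Fm: "F \<in> borel_measurable lebesgue" by (rule cont_meas[OF Fc])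
  have F'm: "(\<lambda>x. F' x i) \<in> borel_measurable lebesgue" by (rule cont_meas[OF cont])
  define h :: "nat \<Rightarrow> real" where "h j = 1 / real (Suc j)" for j
  have hpos: "h j > 0" and hle: "h j \<le> 1" for j by (auto simp: h_def)
  define D where "D j x = (F (x + h j *\<^sub>R i) - F x) / h j" for j x
  have Dm: "D j \<in> borel_measurable lebesgue" for j
  proof -
    have "(\<lambda>x. F (h j *\<^sub>R i + x)) \<in> borel_measurable lebesgue"
      using measurable_compose[OF lebesgue_affine_measurable[of "\<lambda>_::'a. 1" "h j *\<^sub>R i"] Fm]
      unfolding mult_1 euclidean_representation by simp
    then show ?thesis unfolding D_def using Fm by (simp add: add.commute)
  qed
  have D0: "(\<integral>x. D j x \<partial>lebesgue) = 0" for j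
  proof -
    have Fi: "integrable lebesgue F" by (rule cont_supp_int[OF Fc supp])
    have Fti: "integrable lebesgue (\<lambda>x. F (x + h j *\<^sub>R i))"
    proof (rule cont_supp_int)
      show "continuous_on UNIV (\<lambda>x. F (x + h j *\<^sub>R i))"
        by (intro continuous_on_compose2[OF Fc]) (auto intro!: continuous_intros)
      fix x :: 'a assume "norm x > R + 1"
      moreover have "norm (x + h j *\<^sub>R i) \<ge> norm x - h j"
        using norm_triangle_ineq2[of x "- (h j *\<^sub>R i)"] i hpos[of j] by simp
      ultimately show "F (x + h j *\<^sub>R i) = 0" using hle[of j] by (intro supp) linarith
    qed
    have "(\<integral>x. F (x + h j *\<^sub>R i) \<partial>lebesgue) = (\<integral>x. F x \<partial>lebesgue)"
      using integral_translate[OF Fm, of "h j *\<^sub>R i"] by (simp add: add.commute)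
    then show ?thesis unfolding D_def using Fi Fti by simp
  qed
  have "compact ((\<lambda>x. F' x i) ` cball 0 (R + 2))"
    by (rule compact_continuous_image[OF continuous_on_subset[OF cont]]) auto
  then obtain B where B0: "\<forall>y\<in>cball 0 (R + 2). \<bar>F' y i\<bar> \<le> B"
    using compact_imp_bounded[of "(\<lambda>x. F' x i) ` cball 0 (R + 2)"] unfolding bounded_iff by auto
  then have B: "\<And>y. y \<in> cball 0 (R + 2) \<Longrightarrow> \<bar>F' y i\<bar> \<le> B" by blast
  have bound: "\<bar>D j x\<bar> \<le> B * indicator (cball 0 (R + 1)) x" for j x
  proof (cases "x \<in> cball 0 (R + 1)")
    case False
    then have nx: "norm x > R + 1" by (simp add: dist_norm)
    have "norm (x + h j *\<^sub>R i) \<ge> norm x - h j"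
      using norm_triangle_ineq2[of x "- (h j *\<^sub>R i)"] i hpos[of j] by simp
    then have "F (x + h j *\<^sub>R i) = 0" using nx hle[of j] by (intro supp) linarith
    moreover have "F x = 0" using nx by (intro supp) linarith
    ultimately show ?thesis using False by (simp add: D_def)
  next
    case True
    have "\<exists>z. 0 < z \<and> z < h j \<and> F (x + h j *\<^sub>R i) - F (x + 0 *\<^sub>R i) = (h j - 0) * F' (x + z *\<^sub>R i) i"
      by (rule MVT2[OF hpos]) (rule line_deriv[OF der])
    then obtain z where z: "0 < z" "z < h j" "F (x + h j *\<^sub>R i) - F x = h j * F' (x + z *\<^sub>R i) i"
      by auto
    have "norm (x + z *\<^sub>R i) \<le> norm x + z" using norm_triangle_ineq[of x "z *\<^sub>R i"] i z by simp
    then have "x + z *\<^sub>R i \<in> cball 0 (R + 2)" using True[unfolded mem_cball_0] z hle[of j] unfolding mem_cball_0 by linarith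
    then have "\<bar>F' (x + z *\<^sub>R i) i\<bar> \<le> B" by (rule B)
    moreover have "D j x = F' (x + z *\<^sub>R i) i" using z hpos[of j] by (simp add: D_def)
    ultimately show ?thesis using True by simp
  qed
  have wi: "integrable lebesgue (\<lambda>x. B * indicator (cball (0::'a) (R + 1)) x)"
  proof -
    have "emeasure lborel (cball (0::'a) (R + 1)) < \<infinity>" by (rule emeasure_bounded_finite) simp
    then have "integrable lebesgue (indicator (cball (0::'a) (R + 1)) :: 'a \<Rightarrow> real)"
      by (simp add: integrable_indicator_iff)
    then show ?thesis by simp
  qed
  have lim: "AE x in lebesgue. (\<lambda>j. D j x) \<longlonglongrightarrow> F' x i"
  proof (rule AE_I2)
    fix x
    have "((\<lambda>y. (F (x + y *\<^sub>R i) - F (x + 0 *\<^sub>R i)) / (y - 0)) \<longlongrightarrow> F' (x + 0 *\<^sub>R i) i) (at 0)"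
      using line_deriv[OF der, of x i 0] by (simp only: has_field_derivative_iff)
    then have L: "((\<lambda>y. (F (x + y *\<^sub>R i) - F x) / y) \<longlongrightarrow> F' x i) (at 0)" by simp
    have hl: "filterlim h (at 0) sequentially"
    proof (subst filterlim_at, intro conjI)
      have "\<forall>j. h j \<in> UNIV \<and> h j \<noteq> 0" by (simp add: h_def)
      then show "\<forall>\<^sub>F j in sequentially. h j \<in> UNIV \<and> h j \<noteq> 0" by (rule always_eventually)
      have "h = (\<lambda>j. inverse (real (Suc j)))" by (simp add: fun_eq_iff h_def divide_inverse)
      then show "h \<longlonglongrightarrow> 0" using LIMSEQ_inverse_real_of_nat by simp
    qed
    show "(\<lambda>j. D j x) \<longlonglongrightarrow> F' x i"
      unfolding D_def by (rule filterlim_compose[OF L hl])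
  qed
  have "(\<lambda>j. \<integral>x. D j x \<partial>lebesgue) \<longlonglongrightarrow> (\<integral>x. F' x i \<partial>lebesgue)"
  proof (rule integral_dominated_convergence[OF F'm Dm wi lim])
    fix j
    show "AE x in lebesgue. norm (D j x) \<le> B * indicator (cball 0 (R + 1)) x"
      by (rule AE_I2) (simp only: real_norm_def bound)
  qed
  then have "(\<lambda>j. 0::real) \<longlonglongrightarrow> (\<integral>x. F' x i \<partial>lebesgue)" using D0 by simp
  from LIMSEQ_unique[OF tendsto_const this] show ?thesis by simp
qed


definition hb :: "nat \<Rightarrow> real \<Rightarrow> real" where "hb k s = (max 0 (1 - s)) ^ k"
definition hb' :: "nat \<Rightarrow> real \<Rightarrow> real" where "hb' k s = - (real k * (max 0 (1 - s)) ^ (k - 1))"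

lemma hb_deriv:
  assumes k: "k \<ge> 2"
  shows "(hb k has_real_derivative hb' k s) (at s)"
proof -
  consider "s < 1" | "s > 1" | "s = 1" by linarith
  then show ?thesis
  proof cases
    case 1
    have "((\<lambda>s. (1 - s) ^ k) has_real_derivative hb' k s) (at s)"
      by (rule derivative_eq_intros refl | use 1 in \<open>simp add: hb'_def\<close>)+
    then show ?thesis
      by (rule has_field_derivative_transform_within_open[of _ _ _ "{..<1}"]) (use 1 in \<open>auto simp: hb_def\<close>)
  next
    case 2
    have h0: "hb' k s = 0" using 2 k by (simp add: hb'_def)
    have "((\<lambda>s. 0) has_real_derivative hb' k s) (at s)" unfolding h0 by (rule DERIV_const)
    then show ?thesis
      by (rule has_field_derivative_transform_within_open[of _ _ _ "{1<..}"]) (use 2 k in \<open>auto simp: hb_def\<close>)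
  next
    case 3
    have h0: "hb' k 1 = 0" "hb k 1 = 0" using k by (auto simp: hb'_def hb_def)
    have bnd: "norm ((hb k y - hb k 1) / (y - 1)) \<le> \<bar>y - 1\<bar> ^ (k - 1)" for y
    proof (cases "y = 1")
      case True then show ?thesis by simp
    next
      case False
      have m: "max 0 (1 - y) \<le> \<bar>y - 1\<bar>" by simp
      have "\<bar>hb k y\<bar> \<le> \<bar>y - 1\<bar> ^ k"
        unfolding hb_def using m by (simp add: power_mono)
      moreover have "\<bar>y - 1\<bar> ^ k = \<bar>y - 1\<bar> * \<bar>y - 1\<bar> ^ (k - 1)"
        using k by (metis Suc_diff_1 less_le_trans pos2 power_Suc zero_less_Suc)
      ultimately have "\<bar>hb k y\<bar> \<le> \<bar>y - 1\<bar> * \<bar>y - 1\<bar> ^ (k - 1)" by simp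
      then show ?thesis using False h0 by (simp add: abs_divide divide_le_eq mult.commute)
    qed
    have "((\<lambda>y. \<bar>y - 1\<bar> ^ (k - 1)) \<longlongrightarrow> \<bar>1 - 1\<bar> ^ (k - 1)) (at (1::real))"
      by (intro tendsto_intros)
    moreover have z: "\<bar>1 - 1\<bar> ^ (k - 1) = (0::real)" using k by simp
    ultimately have g0: "((\<lambda>y. \<bar>y - 1\<bar> ^ (k - 1)) \<longlongrightarrow> 0) (at (1::real))" by (simp only: z)
    have "((\<lambda>y. (hb k y - hb k 1) / (y - 1)) \<longlongrightarrow> 0) (at 1)"
      by (rule Lim_null_comparison[OF always_eventually g0]) (use bnd in blast)
    then show ?thesis unfolding 3 has_field_derivative_iff using h0 by simp
  qed
qed

definition bm :: "nat \<Rightarrow> 'a::euclidean_space \<Rightarrow> real" where "bm k x = hb k (x \<bullet> x)"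
definition bg :: "nat \<Rightarrow> 'a::euclidean_space \<Rightarrow> 'a" where "bg k x = (2 * hb' k (x \<bullet> x)) *\<^sub>R x"

lemma bm_deriv:
  assumes k: "k \<ge> 2"
  shows "(bm k has_derivative (\<lambda>v. bg k x \<bullet> v)) (at x)"
proof -
  have inn: "((\<lambda>x::'a. x \<bullet> x) has_derivative (\<lambda>v. x \<bullet> v + v \<bullet> x)) (at x)"
    by (rule derivative_eq_intros refl)+
  have hd: "(hb k has_derivative (\<lambda>t. hb' k (x \<bullet> x) * t)) (at (x \<bullet> x))"
    using hb_deriv[OF k, of "x \<bullet> x"] by (simp add: has_field_derivative_def)
  have "((\<lambda>x. hb k (x \<bullet> x)) has_derivative (\<lambda>v. hb' k (x \<bullet> x) * (x \<bullet> v + v \<bullet> x))) (at x)"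
    using has_derivative_compose[OF inn hd] by simp
  moreover have "(\<lambda>v. hb' k (x \<bullet> x) * (x \<bullet> v + v \<bullet> x)) = (\<lambda>v. bg k x \<bullet> v)"
    by (simp add: fun_eq_iff bg_def inner_commute algebra_simps)
  ultimately show ?thesis by (simp add: bm_def[abs_def])
qed

lemma bm_cont: "continuous_on UNIV (bm k :: 'a::euclidean_space \<Rightarrow> real)"
  unfolding bm_def[abs_def] hb_def by (intro continuous_intros)

lemma bg_cont: "continuous_on UNIV (bg k :: 'a::euclidean_space \<Rightarrow> 'a)"
  unfolding bg_def[abs_def] hb'_def by (intro continuous_intros)

lemma bm_supp: "k \<ge> 1 \<Longrightarrow> norm x > 1 \<Longrightarrow> bm k x = 0"
proof -
  assume "k \<ge> 1" "norm x > 1"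
  moreover have "x \<bullet> x = norm x ^ 2" by (simp add: power2_norm_eq_inner)
  moreover have "norm x ^ 2 > 1" using \<open>norm x > 1\<close> by (simp add: one_less_power)
  ultimately show "bm k x = 0" by (simp add: bm_def hb_def)
qed

lemma bg_supp: "k \<ge> 2 \<Longrightarrow> norm x > 1 \<Longrightarrow> bg k x = 0"
proof -
  assume "k \<ge> 2" "norm x > 1"
  moreover have "x \<bullet> x = norm x ^ 2" by (simp add: power2_norm_eq_inner)
  moreover have "norm x ^ 2 > 1" using \<open>norm x > 1\<close> by (simp add: one_less_power)
  ultimately show "bg k x = 0" by (simp add: bg_def hb'_def)
qed

lemma bm_bounds: "0 \<le> bm k x" "bm k x \<le> 1"
proof -
  have "0 \<le> x \<bullet> x" by simp
  then have "0 \<le> max 0 (1 - x \<bullet> x)" "max 0 (1 - x \<bullet> x) \<le> 1" by auto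
  then show "0 \<le> bm k x" "bm k x \<le> 1" by (auto simp: bm_def hb_def power_le_one)
qed

lemma bm_pos: "norm x < 1 \<Longrightarrow> bm k x > 0"
proof -
  assume "norm x < 1"
  moreover have "x \<bullet> x = norm x ^ 2" by (simp add: power2_norm_eq_inner)
  moreover have "norm x ^ 2 < 1" using \<open>norm x < 1\<close> by (simp add: power_less_one_iff abs_less_iff)
  ultimately show "bm k x > 0" by (simp add: bm_def hb_def)
qed

lemma bg_bound: "k \<ge> 2 \<Longrightarrow> norm (bg k x) \<le> 2 * real k"
proof (cases "norm x \<le> 1")
  case True
  have "x \<bullet> x = norm x ^ 2" by (simp add: power2_norm_eq_inner)
  then have a: "0 \<le> max 0 (1 - x \<bullet> x)" "max 0 (1 - x \<bullet> x) \<le> 1" by auto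
  have "norm (bg k x) = 2 * real k * max 0 (1 - x \<bullet> x) ^ (k - 1) * norm x"
    by (simp add: bg_def hb'_def abs_mult)
  also have "\<dots> \<le> 2 * real k * 1 * 1"
    using a True by (intro mult_mono power_le_one) auto
  finally show ?thesis by simp
next
  case False
  assume "k \<ge> 2"
  then have "bg k x = 0" using bg_supp[of k x] False by (simp add: not_le)
  then show ?thesis by simp
qed


lemma cball_int: "integrable lebesgue (\<lambda>x::'a::euclidean_space. (C::real) * indicator (cball 0 1) x)"
proof -
  have "cball (0::'a) 1 \<in> lmeasurable" by simp
  then have "integrable lebesgue (indicator (cball (0::'a) 1) :: 'a \<Rightarrow> real)"
    by (simp add: integrable_indicator_iff fmeasurable_def)
  then show ?thesis by (rule integrable_mult_right)
qed

lemma dom_int: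
  fixes f :: "'a::euclidean_space \<Rightarrow> 'b::{banach, second_countable_topology}"
  assumes m: "f \<in> borel_measurable lebesgue" and b: "\<And>x. norm (f x) \<le> (C::real)"
    and s: "\<And>x. norm x > 1 \<Longrightarrow> f x = 0"
  shows "integrable lebesgue f"
proof (rule Bochner_Integration.integrable_bound[OF cball_int[of C] m])
  show "AE x in lebesgue. norm (f x) \<le> norm (C * indicator (cball 0 1) x)"
  proof (rule AE_I2)
    fix x :: 'a
    have C0: "C \<ge> 0" using b[of x] norm_ge_zero order_trans by blast
    show "norm (f x) \<le> norm (C * indicator (cball 0 1) x)"
    proof (cases "x \<in> cball 0 1")
      case True then show ?thesis using b[of x] C0 by simp
    next
      case False then have "norm x > 1" by (simp add: not_le)
      then show ?thesis using s by simp
    qed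
  qed
qed

lemma Lp_bs:
  fixes f :: "'a::euclidean_space \<Rightarrow> 'b::{real_normed_vector, second_countable_topology}"
  assumes m[measurable]: "f \<in> borel_measurable lebesgue" and b: "\<And>x. norm (f x) \<le> C"
    and s: "\<And>x. norm x > 1 \<Longrightarrow> f x = 0" and p: "p > 0"
  shows "Lp p f"
  unfolding Lp_def
proof (intro conjI)
  show "f \<in> borel_measurable lebesgue" by (rule m)
  show "integrable lebesgue (\<lambda>x. norm (f x) powr p)"
  proof (rule dom_int)
    show "(\<lambda>x. norm (f x) powr p) \<in> borel_measurable lebesgue" by measurable
    show "norm (norm (f x) powr p) \<le> C powr p" for x
      using b[of x] p by (simp add: powr_mono2)
    show "norm (f x) powr p = 0" if "norm x > 1" for x using s[OF that] by simp
  qed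
qed

lemma locint_bs:
  fixes f :: "'a::euclidean_space \<Rightarrow> 'b::{real_normed_vector, second_countable_topology}"
  assumes m[measurable]: "f \<in> borel_measurable lebesgue" and b: "\<And>x. norm (f x) \<le> C"
    and s: "\<And>x. norm x > 1 \<Longrightarrow> f x = 0"
  shows "locint f"
  unfolding locint_def
proof (intro conjI allI impI)
  show "f \<in> borel_measurable lebesgue" by (rule m)
  fix K :: "'a set" assume K: "compact K"
  then have Ks[measurable]: "K \<in> sets lebesgue" using lmeasurable_compact fmeasurableD by blast
  show "integrable lebesgue (\<lambda>x. indicator K x * norm (f x))"
  proof (rule dom_int)
    show "(\<lambda>x. indicator K x * norm (f x)) \<in> borel_measurable lebesgue" by measurable
    show "norm (indicator K x * norm (f x)) \<le> C" for x
    proof -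
      have C0: "C \<ge> 0" using b[of x] norm_ge_zero order_trans by blast
      show ?thesis using b[of x] C0 by (cases "x \<in> K") auto
    qed
    show "indicator K x * norm (f x) = 0" if "norm x > 1" for x using s[OF that] by simp
  qed
qed

lemma bm_zero: "k \<ge> 1 \<Longrightarrow> norm x \<ge> 1 \<Longrightarrow> bm k x = 0"
proof -
  assume "k \<ge> 1" "norm x \<ge> 1"
  moreover have "x \<bullet> x = norm x ^ 2" by (simp add: power2_norm_eq_inner)
  moreover have "norm x ^ 2 \<ge> 1" using \<open>norm x \<ge> 1\<close> by (simp add: one_le_power)
  ultimately show "bm k x = 0" by (simp add: bm_def hb_def)
qed

lemma bg_zero: "k \<ge> 2 \<Longrightarrow> norm x \<ge> 1 \<Longrightarrow> bg k x = 0"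
proof -
  assume "k \<ge> 2" "norm x \<ge> 1"
  moreover have "x \<bullet> x = norm x ^ 2" by (simp add: power2_norm_eq_inner)
  moreover have "norm x ^ 2 \<ge> 1" using \<open>norm x \<ge> 1\<close> by (simp add: one_le_power)
  ultimately show "bg k x = 0" by (simp add: bg_def hb'_def)
qed

lemma Lagr_bd:
  assumes k: "k \<ge> 2" and kr: "real k \<ge> r" and r: "r > 1"
  shows "Lagr r (bm k x) (bg k x) \<le> ennreal ((2 * real k) powr r) * indicator (cball 0 1) x"
proof (cases "norm x < 1")
  case False
  then show ?thesis using bm_zero[of k x] bg_zero[OF k, of x] k by (simp add: Lagr_def not_less)
next
  case True
  define y where "y = max 0 (1 - x \<bullet> x)"
  have bmp: "bm k x > 0" by (rule bm_pos[OF True])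
  have bmy: "bm k x = y ^ k" by (simp add: bm_def hb_def y_def)
  have y0: "y > 0" using bmp bmy k by (cases "y = 0") (auto simp: y_def power_0_left)
  have y1: "y \<le> 1" by (simp add: y_def)
  have nbg: "norm (bg k x) = 2 * real k * y ^ (k - 1) * norm x"
    by (simp add: bg_def hb'_def y_def abs_mult)
  have e1: "norm (bg k x) powr r = (2 * real k * norm x) powr r * y powr (real (k - 1) * r)"
  proof -
    have "norm (bg k x) powr r = (2 * real k * norm x) powr r * (y ^ (k - 1)) powr r"
      unfolding nbg using y0 by (simp add: powr_mult[symmetric] mult_ac)
    also have "(y ^ (k - 1)) powr r = y powr (real (k - 1) * r)"
      using y0 by (simp add: powr_realpow[symmetric] powr_powr)
    finally show ?thesis .
  qed
  have e2: "bm k x powr (1 - r) = y powr (real k * (1 - r))"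
    unfolding bmy using y0 by (simp add: powr_realpow[symmetric] powr_powr)
  have e3: "y powr (real (k - 1) * r) * y powr (real k * (1 - r)) = y powr (real k - r)"
  proof -
    have "real (k - 1) * r + real k * (1 - r) = real k - r" using k by (simp add: of_nat_diff algebra_simps)
    then show ?thesis using y0 by (simp flip: powr_add)
  qed
  have le1: "y powr (real k - r) \<le> 1" using y0 y1 kr by (intro powr_le1) auto
  have le2: "(2 * real k * norm x) powr r \<le> (2 * real k) powr r"
    using True r by (intro powr_mono2) (auto intro: mult_left_le)
  have "norm (bg k x) powr r * bm k x powr (1 - r) \<le> (2 * real k) powr r"
  proof -
    have "norm (bg k x) powr r * bm k x powr (1 - r) = (2 * real k * norm x) powr r * y powr (real k - r)"
      unfolding e1 e2 e3[symmetric] by (simp add: mult_ac)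
    also have "\<dots> \<le> (2 * real k) powr r * 1"
      using le1 le2 by (intro mult_mono) auto
    finally show ?thesis by simp
  qed
  moreover have "x \<in> cball 0 1" using True by simp
  ultimately show ?thesis using bmp by (simp add: Lagr_def)
qed

lemma kin_bump_fin:
  assumes k: "k \<ge> 2" and kr: "real k \<ge> r" and r: "r > 1"
  shows "kin r (bm k :: 'a::euclidean_space \<Rightarrow> real) (bg k) < \<infinity>"
proof -
  have "kin r (bm k :: 'a \<Rightarrow> real) (bg k) \<le> (\<integral>\<^sup>+x. ennreal ((2 * real k) powr r) * indicator (cball (0::'a) 1) x \<partial>lebesgue)"
    unfolding kin_def by (intro nn_integral_mono Lagr_bd[OF k kr r])
  also have "\<dots> = ennreal ((2 * real k) powr r) * emeasure lebesgue (cball (0::'a) 1)"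
    by (rule nn_integral_cmult_indicator) (simp add: fmeasurableD)
  also have "\<dots> < \<infinity>"
    using lmeasurable_cball[of "0::'a" 1] by (simp add: fmeasurable_def ennreal_mult_less_top)
  finally show ?thesis .
qed

lemma bm_notAE: "\<not> (AE x in lebesgue. bm k (x::'a::euclidean_space) = 0)"
proof
  assume A: "AE x in lebesgue. bm k (x::'a) = 0"
  have "AE x in lebesgue. x \<notin> ball (0::'a) 1"
    using A by eventually_elim (metis bm_pos less_irrefl mem_ball_0)
  then have "emeasure lebesgue (ball (0::'a) 1) = 0"
  proof -
    have B: "{x \<in> space lebesgue. \<not> (x \<notin> ball (0::'a) 1)} = ball 0 1" by (auto simp: mem_ball_0)
    have S: "ball (0::'a) 1 \<in> sets lebesgue" by (simp add: fmeasurableD)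
    show "emeasure lebesgue (ball (0::'a) 1) = 0" using AE_iff_measurable[OF S B] \<open>AE x in lebesgue. x \<notin> ball (0::'a) 1\<close> by simp
  qed
  then have "measure lebesgue (ball (0::'a) 1) = 0" by (simp add: measure_def)
  moreover have "measure lebesgue (ball (0::'a) 1) = measure lborel (ball (0::'a) 1)"
    by (simp add: measure_completion)
  moreover have "measure lborel (ball (0::'a) 1) > 0" using content_ball_pos[of 1 "0::'a"] by simp
  ultimately show False by simp
qed


lemma weak_grad_bump:
  assumes k: "k \<ge> 2"
  shows "weak_grad (bm k :: 'a::euclidean_space \<Rightarrow> real) (bg k)"
  unfolding weak_grad_def
proof (intro conjI allI impI ballI)
  have mm: "(bm k :: 'a \<Rightarrow> real) \<in> borel_measurable lebesgue" by (rule cont_meas[OF bm_cont])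
  have gm: "(bg k :: 'a \<Rightarrow> 'a) \<in> borel_measurable lebesgue" by (rule cont_meas[OF bg_cont])
  have mb: "norm (bm k x) \<le> 1" for x :: 'a using bm_bounds[of k x] by simp
  have ms: "bm k x = 0" if "norm x > 1" for x :: 'a using bm_supp[of k x] k that by simp
  show "locint (bm k :: 'a \<Rightarrow> real)"
    by (rule locint_bs[OF mm mb ms])
  show "locint (bg k :: 'a \<Rightarrow> 'a)"
    by (rule locint_bs[OF gm bg_bound[OF k]]) (use bg_supp k in auto)
  fix \<phi> :: "'a \<Rightarrow> real" and i :: 'a assume \<phi>: "test_fun \<phi>" and i: "i \<in> Basis"
  have sm: "smooth_fun \<phi>" using \<phi> by (simp add: test_fun_def)
  have dphi: "\<phi> differentiable at x" for x using sm unfolding smooth_fun_def by (metis empty_subsetI list.set(1) pderivs.simps(1))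
  have dpd: "pd i \<phi> differentiable at x" for x
    using sm i unfolding smooth_fun_def by (metis empty_subsetI insert_subset list.set(1) list.simps(15) pderivs.simps)
  have cphi: "continuous_on UNIV \<phi>"
    using dphi by (intro continuous_at_imp_continuous_on ballI differentiable_imp_continuous_within) auto
  have cpd: "continuous_on UNIV (pd i \<phi>)"
    using dpd by (intro continuous_at_imp_continuous_on ballI differentiable_imp_continuous_within) auto
  obtain R where R: "\<And>x. \<phi> x \<noteq> 0 \<Longrightarrow> norm x \<le> R"
    using \<phi> unfolding test_fun_def bounded_iff by auto
  define F' where "F' x = (\<lambda>v. bm k x * frechet_derivative \<phi> (at x) v + (bg k x \<bullet> v) * \<phi> x)" for x
  have der: "((\<lambda>x. bm k x * \<phi> x) has_derivative F' x) (at x)" for x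
  proof -
    have d1: "(\<phi> has_derivative frechet_derivative \<phi> (at x)) (at x)"
      using dphi[of x] by (simp add: frechet_derivative_works)
    show ?thesis unfolding F'_def
      using has_derivative_mult[OF bm_deriv[OF k, of x] d1] by (simp add: mult_ac)
  qed
  have F'i: "F' x i = bm k x * pd i \<phi> x + (bg k x \<bullet> i) * \<phi> x" for x
    by (simp add: F'_def pd_def)
  have c1: "continuous_on UNIV (\<lambda>x. bm k x * pd i \<phi> x)"
    by (intro continuous_intros bm_cont cpd)
  have c2: "continuous_on UNIV (\<lambda>x. (bg k x \<bullet> i) * \<phi> x)"
    by (intro continuous_intros bg_cont cphi)
  have cont: "continuous_on UNIV (\<lambda>x. F' x i)"
    unfolding F'i by (intro continuous_intros c1 c2)
  have "(\<integral>x. F' x i \<partial>lebesgue) = 0"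
  proof (rule ibp0[OF der cont, of R])
    show "bm k x * \<phi> x = 0" if "norm x > R" for x using R[of x] that by force
    show "norm i = 1" using i by simp
  qed
  moreover have i1: "integrable lebesgue (\<lambda>x. bm k x * pd i \<phi> x)"
    by (rule cont_supp_int[OF c1, of 1]) (use ms in auto)
  moreover have i2: "integrable lebesgue (\<lambda>x. (bg k x \<bullet> i) * \<phi> x)"
    by (rule cont_supp_int[OF c2, of 1]) (simp add: bg_supp[OF k])
  ultimately have "(\<integral>x. bm k x * pd i \<phi> x \<partial>lebesgue) + (\<integral>x. (bg k x \<bullet> i) * \<phi> x \<partial>lebesgue) = 0"
    unfolding F'i by (simp add: integral_add)
  then show "(\<integral>x. bm k x * pd i \<phi> x \<partial>lebesgue) = - (\<integral>x. (bg k x \<bullet> i) * \<phi> x \<partial>lebesgue)" by simp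
qed

lemma exists_fin:
  assumes r: "r > 1" and q: "qhat DIM('a) r q0 > 0" and b: "b > 0"
  shows "\<exists>(m :: 'a::euclidean_space \<Rightarrow> real) w. admissible r q0 b m w \<and> kin r m w < \<infinity>"
proof -
  define k where "k = nat \<lceil>r\<rceil> + 2"
  have k: "k \<ge> 2" by (simp add: k_def)
  have kr: "real k \<ge> r" unfolding k_def using r by linarith
  let ?q = "qhat DIM('a) r q0"
  have mm: "(bm k :: 'a \<Rightarrow> real) \<in> borel_measurable lebesgue" by (rule cont_meas[OF bm_cont])
  have gm: "(bg k :: 'a \<Rightarrow> 'a) \<in> borel_measurable lebesgue" by (rule cont_meas[OF bg_cont])
  have mb: "norm (bm k x) \<le> 1" for x :: 'a using bm_bounds[of k x] by simp
  have ms: "bm k x = 0" if "norm x > 1" for x :: 'a using bm_supp[of k x] k that by simp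
  have gs: "bg k x = 0" if "norm x > 1" for x :: 'a using bg_supp[OF k that] .
  have Lpm: "Lp p (bm k :: 'a \<Rightarrow> real)" if "p > 0" for p by (rule Lp_bs[OF mm mb ms that])
  have Lpg: "Lp p (bg k :: 'a \<Rightarrow> 'a)" if "p > 0" for p by (rule Lp_bs[OF gm bg_bound[OF k] gs that])
  have wg: "weak_grad (bm k :: 'a \<Rightarrow> real) (bg k)" by (rule weak_grad_bump[OF k])
  have mom: "integrable lebesgue (\<lambda>x::'a. norm x powr b * bm k x)"
  proof (rule dom_int)
    have [measurable]: "(\<lambda>x::'a. x) \<in> borel_measurable lebesgue"
      using id_borel_measurable_lebesgue by (simp add: id_def)
    have [measurable]: "(bm k :: 'a \<Rightarrow> real) \<in> borel_measurable lebesgue" by (rule mm)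
    show "(\<lambda>x::'a. norm x powr b * bm k x) \<in> borel_measurable lebesgue" by measurable
    show "norm (norm x powr b * bm k x) \<le> 1" for x :: 'a
    proof (cases "norm x \<le> 1")
      case True
      have "norm x powr b \<le> 1" using True b by (intro powr_le1) auto
      then show ?thesis using bm_bounds[of k x] by (simp add: abs_mult mult_le_one)
    next
      case False then show ?thesis using ms[of x] by simp
    qed
    show "norm x powr b * bm k x = 0" if "norm x > 1" for x :: 'a using ms[OF that] by simp
  qed
  have nAE: "\<not> (AE x in lebesgue. bm k (x::'a) = 0)" by (rule bm_notAE)
  have nn: "\<forall>x::'a. 0 \<le> bm k x" by (intro allI bm_bounds(1))
  have adm: "admissible r q0 b (bm k :: 'a \<Rightarrow> real) (bg k)"
    unfolding admissible_def W1p_def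
    using Lpm[of 1] Lpm[OF q] Lpg[of 1] Lpg[OF q] wg mom nn nAE by auto
  show ?thesis using adm kin_bump_fin[OF k kr r] by blast
qed


definition Vf :: "real \<Rightarrow> real \<Rightarrow> real \<Rightarrow> real" where
  "Vf s a k = - ((1 - s) * a * ((s * a / k) powr (1 / (1 - s))) powr s)"

lemma opt_ineq:
  assumes k: "k > 0" and a: "a > 0" and s: "0 < s" "s < 1" and u: "u > 0"
  shows "u * k - a * u powr s \<ge> Vf s a k"
proof -
  define u0 where "u0 = (s * a / k) powr (1 / (1 - s))"
  have u0p: "u0 > 0" using k a s by (simp add: u0_def)
  have u0e: "u0 powr (1 - s) = s * a / k"
    using k a s by (simp add: u0_def powr_powr)
  have key: "a * s * u0 powr s / u0 = k"
  proof -
    have "u0 powr s / u0 = 1 / u0 powr (1 - s)"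
      using u0p by (simp add: powr_diff)
    then show ?thesis using u0e k a s by (simp add: field_simps)
  qed
  have Y: "(u / u0) powr s * 1 powr (1 - s) \<le> s * (u / u0) + (1 - s) * 1"
    by (rule Youngs_inequality_0) (use s u u0p in auto)
  have "u powr s = u0 powr s * (u / u0) powr s"
    using u u0p by (simp add: powr_divide)
  also have "\<dots> \<le> u0 powr s * (s * (u / u0) + (1 - s))"
    using Y u0p by (intro mult_left_mono) auto
  finally have "a * u powr s \<le> a * (u0 powr s * (s * (u / u0) + (1 - s)))"
    using a by (intro mult_left_mono) auto
  also have "\<dots> = u * (a * s * u0 powr s / u0) + (1 - s) * a * u0 powr s"
    using u0p by (simp add: field_simps)
  also have "\<dots> = u * k + (1 - s) * a * u0 powr s" by (simp add: key)
  finally have X: "a * u powr s \<le> u * k + (1 - s) * a * u0 powr s" .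
  have "Vf s a k = - ((1 - s) * a * u0 powr s)" unfolding Vf_def u0_def ..
  then show ?thesis using X by linarith
qed

lemma opt_attain:
  assumes k: "k > 0" and a: "a > 0" and s: "0 < s" "s < 1"
  shows "\<exists>u>0. u * k - a * u powr s = Vf s a k"
proof -
  define u0 where "u0 = (s * a / k) powr (1 / (1 - s))"
  have u0p: "u0 > 0" using k a s by (simp add: u0_def)
  have u0e: "u0 powr (1 - s) = s * a / k"
    using k a s by (simp add: u0_def powr_powr)
  have key: "u0 * k = a * s * u0 powr s"
  proof -
    have "u0 = u0 powr s * u0 powr (1 - s)" using u0p by (simp flip: powr_add)
    then show ?thesis using u0e k by (simp add: field_simps)
  qed
  have "Vf s a k = - ((1 - s) * a * u0 powr s)" unfolding Vf_def u0_def ..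
  also have "\<dots> = u0 * k - a * u0 powr s" using key by (simp add: algebra_simps)
  finally show ?thesis using u0p by auto
qed

lemma Vf_neg:
  assumes k: "k > 0" and a: "a > 0" and s: "0 < s" "s < 1"
  shows "Vf s a k < 0"
proof -
  have "(1 - s) * a * ((s * a / k) powr (1 / (1 - s))) powr s > 0"
    using assms by (intro mult_pos_pos) auto
  then show ?thesis unfolding Vf_def by linarith
qed

lemma Vf_Q:
  assumes k: "k > 0" and p: "p > 0" and s: "0 < s" "s < 1" and al: "\<alpha> > -1"
  shows "Vf s (p / (\<alpha> + 1)) k
     = - ((1 - s) * s powr (s / (1 - s)) * (\<alpha> + 1) powr (- 1 / (1 - s))) * (k powr s / p) powr (- 1 / (1 - s))"
proof -
  have a1: "\<alpha> + 1 > 0" using al by simp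
  have "((s * (p / (\<alpha> + 1)) / k) powr (1 / (1 - s))) powr s = (s * (p / (\<alpha> + 1)) / k) powr (s / (1 - s))"
    using s by (simp add: powr_powr)
  also have "\<dots> = s powr (s / (1 - s)) * p powr (s / (1 - s)) * (\<alpha> + 1) powr (- (s / (1 - s))) * k powr (- (s / (1 - s)))"
    using s k p a1 by (simp add: powr_mult powr_divide powr_minus divide_inverse inverse_powr)
  finally have e1: "((s * (p / (\<alpha> + 1)) / k) powr (1 / (1 - s))) powr s
     = s powr (s / (1 - s)) * p powr (s / (1 - s)) * (\<alpha> + 1) powr (- (s / (1 - s))) * k powr (- (s / (1 - s)))" .
  have e2: "(k powr s / p) powr (- 1 / (1 - s)) = k powr (- (s / (1 - s))) * p powr (1 / (1 - s))"
  proof -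
    have "(k powr s / p) powr (- 1 / (1 - s)) = (k powr s) powr (- 1 / (1 - s)) / p powr (- 1 / (1 - s))"
      using k p by (simp add: powr_divide)
    also have "(k powr s) powr (- 1 / (1 - s)) = k powr (- (s / (1 - s)))"
      by (simp add: powr_powr)
    also have "p powr (- 1 / (1 - s)) = inverse (p powr (1 / (1 - s)))"
      by (simp add: powr_minus[symmetric])
    finally show ?thesis by (simp add: divide_inverse)
  qed
  have e3: "p * p powr (s / (1 - s)) = p powr (1 / (1 - s))"
  proof -
    have "p * p powr (s / (1 - s)) = p powr (1 + s / (1 - s))" using p by (simp add: powr_add)
    moreover have "1 + s / (1 - s) = 1 / (1 - s)" using s by (simp add: field_simps)
    ultimately show ?thesis by simp
  qed
  have e4: "(\<alpha> + 1) powr (- (s / (1 - s))) / (\<alpha> + 1) = (\<alpha> + 1) powr (- 1 / (1 - s))"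
  proof -
    have "(\<alpha> + 1) powr (- (s / (1 - s))) / (\<alpha> + 1) = (\<alpha> + 1) powr (- (s / (1 - s)) - 1)"
      using a1 by (simp add: powr_diff)
    moreover have "- (s / (1 - s)) - 1 = - 1 / (1 - s)" using s by (simp add: field_simps)
    ultimately show ?thesis by simp
  qed
  have gen: "\<And>S P1 A1 K1 A::real. (1 - s) * (p / A) * (S * P1 * A1 * K1) = (1 - s) * S * (A1 / A) * (K1 * (p * P1))"
    by (simp add: divide_inverse mult_ac)
  show ?thesis
    unfolding Vf_def e1 e2 gen e3 e4 by (simp add: mult_ac)
qed


abbreviation Pf :: "real \<Rightarrow> ('a::euclidean_space \<Rightarrow> real) \<Rightarrow> ennreal" where
  "Pf \<alpha> m \<equiv> (\<integral>\<^sup>+x. ennreal (m x powr (\<alpha> + 1)) \<partial>lebesgue)"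

lemma E0_fin:
  assumes "kin (conj_exp r') m w = ennreal kk" "Pf \<alpha> m = ennreal pp" "kk \<ge> 0" "pp \<ge> 0" "\<alpha> > -1"
  shows "E0 r' CH \<alpha> m w = ereal (C_L r' CH * kk - pp / (\<alpha> + 1))"
  using assms unfolding E0_def by simp

lemma E0_Ptop:
  assumes "kin (conj_exp r') m w \<noteq> \<infinity>" "Pf \<alpha> m = \<infinity>" "\<alpha> > -1"
  shows "E0 r' CH \<alpha> m w = -\<infinity>"
proof -
  obtain kk where "kin (conj_exp r') m w = ennreal kk" "kk \<ge> 0"
    using assms(1) by (cases "kin (conj_exp r') m w") auto
  then show ?thesis using assms unfolding E0_def by simp
qed

lemma E0_Ktop:
  assumes "kin (conj_exp r') m w = \<infinity>" "Pf \<alpha> m \<noteq> \<infinity>" "\<alpha> > -1" "C_L r' CH > 0"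
  shows "E0 r' CH \<alpha> m w = \<infinity>"
proof -
  obtain pp where "Pf \<alpha> m = ennreal pp" "pp \<ge> 0"
    using assms(2) by (cases "Pf \<alpha> m") auto
  then show ?thesis using assms unfolding E0_def by simp
qed

lemma adm_meas:
  assumes "admissible r q0 b m w"
  shows "m \<in> borel_measurable lebesgue" "w \<in> borel_measurable lebesgue" "\<And>x. m x \<ge> 0"
  using assms by (auto simp: admissible_def Lp_def)

lemma dil:
  fixes m :: "'a::euclidean_space \<Rightarrow> real"
  assumes adm: "admissible_M r q0 b M m w" and r: "r > 0" and u: "u > 0"
  shows "\<exists>(m' :: 'a \<Rightarrow> real) (w' :: 'a \<Rightarrow> 'a). admissible_M r q0 b M m' w' \<and> kin r m' w' = ennreal u * kin r m w
     \<and> Pf \<alpha> m' = ennreal (u powr (real DIM('a) * \<alpha> / r)) * Pf \<alpha> m"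
proof -
  define t where "t = u powr (1 / r)"
  define c where "c = t ^ DIM('a)"
  have t: "t > 0" using u by (simp add: t_def)
  have c: "c > 0" using t by (simp add: c_def)
  have a: "admissible r q0 b m w" and Mm: "(\<integral>x. m x \<partial>lebesgue) = M" using adm by (auto simp: admissible_M_def)
  note mm = adm_meas[OF a]
  have ct: "c / t ^ DIM('a) = 1" using t by (simp add: c_def)
  have tr: "t powr r = u" using u r by (simp add: t_def powr_powr)
  have cn: "c = t powr real DIM('a)" using t by (simp add: c_def powr_realpow)
  have cp: "c powr (\<alpha> + 1) / t ^ DIM('a) = u powr (real DIM('a) * \<alpha> / r)"
  proof -
    have e1: "c powr (\<alpha> + 1) = t powr (real DIM('a) * (\<alpha> + 1))" unfolding cn by (simp only: powr_powr)
    have e2: "t ^ DIM('a) = t powr real DIM('a)" using t by (simp add: powr_realpow)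
    have "c powr (\<alpha> + 1) / t ^ DIM('a) = t powr (real DIM('a) * (\<alpha> + 1)) / t powr real DIM('a)"
      unfolding e1 e2 ..
    also have "\<dots> = t powr (real DIM('a) * \<alpha>)"
      using t by (simp add: powr_diff[symmetric] algebra_simps)
    also have "\<dots> = u powr (real DIM('a) * \<alpha> / r)"
      using u r by (simp add: t_def powr_powr)
    finally show ?thesis .
  qed
  have h1: "admissible_M r q0 b M (\<lambda>x. c * m (t *\<^sub>R x)) (\<lambda>x. (c * t) *\<^sub>R w (t *\<^sub>R x))"
    unfolding admissible_M_def using admissible_tr[OF a c t] mass_tr[OF t, of c m] Mm ct c
    by simp
  have h2: "kin r (\<lambda>x. c * m (t *\<^sub>R x)) (\<lambda>x. (c * t) *\<^sub>R w (t *\<^sub>R x)) = ennreal u * kin r m w"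
    unfolding kin_tr[OF mm(1,2) c t] using ct tr c by (simp add: mult.commute)
  have h3: "Pf \<alpha> (\<lambda>x. c * m (t *\<^sub>R x)) = ennreal (u powr (real DIM('a) * \<alpha> / r)) * Pf \<alpha> m"
    unfolding P_tr[OF mm(1) mm(3) c t] cp ..
  show ?thesis
    apply (rule exI[of _ "\<lambda>x. c * m (t *\<^sub>R x)"], rule exI[of _ "\<lambda>x. (c * t) *\<^sub>R w (t *\<^sub>R x)"])
    using h1 h2 h3 by (intro conjI)
qed

lemma csc:
  fixes m :: "'a::euclidean_space \<Rightarrow> real"
  assumes a: "admissible r q0 b m w" and c: "c > 0"
  shows "admissible r q0 b (\<lambda>x. c * m x) (\<lambda>x. c *\<^sub>R w x)"
    "kin r (\<lambda>x. c * m x) (\<lambda>x. c *\<^sub>R w x) = ennreal c * kin r m w"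
    "Pf \<alpha> (\<lambda>x. c * m x) = ennreal (c powr (\<alpha> + 1)) * Pf \<alpha> m"
    "(\<integral>x. c * m x \<partial>lebesgue) = c * (\<integral>x. m x \<partial>lebesgue)"
proof -
  note mm = adm_meas[OF a]
  have t: "(1::real) > 0" by simp
  show "admissible r q0 b (\<lambda>x. c * m x) (\<lambda>x. c *\<^sub>R w x)"
    using admissible_tr[OF a c t] by simp
  show "kin r (\<lambda>x. c * m x) (\<lambda>x. c *\<^sub>R w x) = ennreal c * kin r m w"
    using kin_tr[OF mm(1,2) c t, of r] by simp
  show "Pf \<alpha> (\<lambda>x. c * m x) = ennreal (c powr (\<alpha> + 1)) * Pf \<alpha> m"
    using P_tr[OF mm(1) mm(3) c t, of "\<alpha> + 1"] by simp
  show "(\<integral>x. c * m x \<partial>lebesgue) = c * (\<integral>x. m x \<partial>lebesgue)" by simp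
qed

lemma mass_pos:
  assumes a: "admissible r q0 b m w"
  shows "(\<integral>x. m x \<partial>lebesgue) > 0"
proof -
  note mm = adm_meas[OF a]
  have "integrable lebesgue (\<lambda>x. norm (m x) powr 1)" using a by (auto simp: admissible_def Lp_def)
  moreover have "(\<lambda>x. norm (m x) powr 1) = m" using mm(3) by (auto simp: fun_eq_iff)
  ultimately have im: "integrable lebesgue m" by simp
  have ne: "\<not> (AE x in lebesgue. m x = 0)" using a by (simp add: admissible_def)
  have ge: "(\<integral>x. m x \<partial>lebesgue) \<ge> 0" using mm(3) by simp
  have "(\<integral>x. m x \<partial>lebesgue) \<noteq> 0"
    using integral_nonneg_eq_0_iff_AE[OF im] mm(3) ne by simp
  then show ?thesis using ge by simp
qed

lemma P_pos:
  assumes a: "admissible r q0 b m w" and al: "\<alpha> > -1"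
  shows "Pf \<alpha> m \<noteq> 0"
proof
  note mm = adm_meas[OF a]
  assume "Pf \<alpha> m = 0"
  then have "AE x in lebesgue. ennreal (m x powr (\<alpha> + 1)) = 0"
    using nn_integral_0_iff_AE[of "\<lambda>x. ennreal (m x powr (\<alpha> + 1))" lebesgue] mm(1) by simp
  then have "AE x in lebesgue. m x = 0"
  proof (rule AE_mp, intro AE_I2 impI)
    fix x assume "ennreal (m x powr (\<alpha> + 1)) = 0"
    then have "m x powr (\<alpha> + 1) \<le> 0" by simp
    then show "m x = 0" using mm(3)[of x] by (cases "m x = 0") auto
  qed
  then show False using a by (simp add: admissible_def)
qed

lemma P_fin:
  assumes "Lp (\<alpha> + 1) m" "\<And>x. m x \<ge> 0"
  shows "Pf \<alpha> m \<noteq> \<infinity>"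
proof -
  have i: "integrable lebesgue (\<lambda>x. norm (m x) powr (\<alpha> + 1))" using assms by (simp add: Lp_def)
  have "(\<lambda>x. norm (m x) powr (\<alpha> + 1)) = (\<lambda>x. m x powr (\<alpha> + 1))" using assms(2) by auto
  with i have i2: "integrable lebesgue (\<lambda>x. m x powr (\<alpha> + 1))" by simp
  have "Pf \<alpha> m = ennreal (\<integral>x. m x powr (\<alpha> + 1) \<partial>lebesgue)"
    by (rule nn_integral_eq_integral[OF i2]) auto
  then show ?thesis by simp
qed

lemma final_alg:
  fixes Q s \<alpha> E :: real
  assumes Q: "Q > 0" and s: "0 < s" "s < 1" and al: "\<alpha> > -1"
    and E: "E = - ((1 - s) * s powr (s / (1 - s)) * (\<alpha> + 1) powr (- 1 / (1 - s))) * Q powr (- 1 / (1 - s))"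
  shows "Q = s / (1 + \<alpha>) * (- E) powr (s - 1) * ((1 - s) / s) powr (1 - s)"
proof -
  define C2 where "C2 = (1 - s) * s powr (s / (1 - s)) * (\<alpha> + 1) powr (- 1 / (1 - s))"
  have a1: "\<alpha> + 1 > 0" using al by linarith
  have C2p: "C2 > 0" using s a1 by (simp add: C2_def)
  have mE: "- E = C2 * Q powr (- 1 / (1 - s))" using E by (simp add: C2_def)
  have "(- E) powr (s - 1) = C2 powr (s - 1) * Q"
  proof -
    have "(- E) powr (s - 1) = C2 powr (s - 1) * (Q powr (- 1 / (1 - s))) powr (s - 1)"
      unfolding mE using C2p Q by (simp add: powr_mult)
    also have "(Q powr (- 1 / (1 - s))) powr (s - 1) = Q"
    proof -
      have "(- 1 / (1 - s)) * (s - 1) = 1" using s by (simp add: field_simps)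
      then show ?thesis using Q by (simp add: powr_powr)
    qed
    finally show ?thesis .
  qed
  moreover have "C2 powr (s - 1) * (s / (1 + \<alpha>) * ((1 - s) / s) powr (1 - s)) = 1"
  proof -
    have eA: "C2 powr (s - 1) = (1 - s) powr (s - 1) * s powr (- s) * (\<alpha> + 1)"
    proof -
      have "C2 powr (s - 1) = (1 - s) powr (s - 1) * (s powr (s / (1 - s))) powr (s - 1) * ((\<alpha> + 1) powr (- 1 / (1 - s))) powr (s - 1)"
        using s a1 by (simp add: C2_def powr_mult)
      also have "(s powr (s / (1 - s))) powr (s - 1) = s powr (- s)"
      proof -
        have "s / (1 - s) * (s - 1) = - s" using s by (simp add: field_simps)
        then show ?thesis by (simp add: powr_powr)
      qed
      also have "((\<alpha> + 1) powr (- 1 / (1 - s))) powr (s - 1) = \<alpha> + 1"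
      proof -
        have "(- 1 / (1 - s)) * (s - 1) = 1" using s by (simp add: field_simps)
        then show ?thesis using a1 by (simp add: powr_powr)
      qed
      finally show ?thesis .
    qed
    have eX: "((1 - s) / s) powr (1 - s) = (1 - s) powr (1 - s) * s powr (s - 1)"
    proof -
      have d: "((1 - s) / s) powr (1 - s) = (1 - s) powr (1 - s) / s powr (1 - s)"
        by (rule powr_divide)
      have "s powr (s - 1) = inverse (s powr (1 - s))"
        by (metis minus_diff_eq powr_minus)
      then show ?thesis unfolding d by (simp add: divide_inverse)
    qed
    have e1: "(1 - s) powr (s - 1) * (1 - s) powr (1 - s) = 1"
      using s by (simp flip: powr_add)
    have e2: "s powr (- s) * s * s powr (s - 1) = 1"
    proof -
      have "s powr (- s) * s * s powr (s - 1) = s powr (- s) * s powr 1 * s powr (s - 1)" using s by simp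
      also have "\<dots> = s powr (- s + 1 + (s - 1))" by (simp only: powr_add)
      also have "\<dots> = 1" using s by simp
      finally show ?thesis .
    qed
    have e3: "(\<alpha> + 1) / (1 + \<alpha>) = 1" using a1 by simp
    have gen: "\<And>a b c d e::real. (a * c * e) * (s / (1 + \<alpha>) * (b * d)) = (a * b) * (c * s * d) * (e / (1 + \<alpha>))"
      by (simp add: divide_inverse mult_ac)
    show ?thesis unfolding eA eX gen e1 e2 e3 by simp
  qed
  ultimately show ?thesis
  proof -
    assume h1: "(- E) powr (s - 1) = C2 powr (s - 1) * Q"
      and h2: "C2 powr (s - 1) * (s / (1 + \<alpha>) * ((1 - s) / s) powr (1 - s)) = 1"
    have "s / (1 + \<alpha>) * (- E) powr (s - 1) * ((1 - s) / s) powr (1 - s)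
        = (C2 powr (s - 1) * (s / (1 + \<alpha>) * ((1 - s) / s) powr (1 - s))) * Q"
      unfolding h1 by (simp add: mult_ac)
    from this[unfolded h2] show ?thesis by simp
  qed
qed


lemma E0_lt_top:
  assumes "kin (conj_exp r') m w \<noteq> \<infinity>" "\<alpha> > -1"
  shows "E0 r' CH \<alpha> m w < \<infinity>"
proof (cases "Pf \<alpha> m = \<infinity>")
  case True
  then show ?thesis using E0_Ptop[OF assms(1) True assms(2)] by simp
next
  case False
  obtain kk where k: "kin (conj_exp r') m w = ennreal kk" "kk \<ge> 0"
    using assms(1) by (cases "kin (conj_exp r') m w") auto
  obtain pp where p: "Pf \<alpha> m = ennreal pp" "pp \<ge> 0"
    using False by (cases "Pf \<alpha> m") auto
  show ?thesis using E0_fin[OF k(1) p(1) k(2) p(2) assms(2)] by simp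
qed

theorem lemma4p1:
  fixes r' CH q0 b \<alpha> M lam :: real
    and mb :: "'a::euclidean_space \<Rightarrow> real" and wb :: "'a \<Rightarrow> 'a" and ub :: "'a \<Rightarrow> real"
  defines "r \<equiv> conj_exp r'" and "n \<equiv> real DIM('a)"
  assumes r': "r' > 1" and CH: "CH > 0" and b: "b > 0"
    and q0: "r = n \<longrightarrow> 2 * n / (n + 2) < q0 \<and> q0 < n"
    and n2: "DIM('a) \<ge> 2"
    and alpha: "0 < \<alpha>" "\<alpha> < r / n" and M: "M > 0"
    and adm: "admissible_M r q0 b M mb wb"
    and minimizer: "E0 r' CH \<alpha> mb wb = e0 TYPE('a) r' CH q0 b \<alpha> M"
    and lam_neg: "lam < 0"
    and u_C2: "C2_fun ub" and u_below: "\<exists>c. \<forall>x. c \<le> ub x"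
    and m_sob: "\<forall>p\<ge>1. W1p p mb"
    and m_decay: "\<exists>c1 c2. c1 > 0 \<and> c2 > 0 \<and> (\<forall>x. 0 < mb x \<and> mb x \<le> c1 * exp (- c2 * norm x))"
    and w_def: "AE x in lebesgue. wb x = (- (CH * r' * mb x * norm (grad ub x) powr (r' - 2))) *\<^sub>R grad ub x"
    and HJB: "\<forall>x. - lap ub x + CH * norm (grad ub x) powr r' + lam = - (mb x powr \<alpha>)"
    and FP: "\<exists>g. weak_grad mb g \<and> (\<forall>\<phi>. test_fun \<phi> \<longrightarrow>
              (\<integral>x. g x \<bullet> grad \<phi> x \<partial>lebesgue)
              + CH * r' * (\<integral>x. mb x * norm (grad ub x) powr (r' - 2) * (grad ub x \<bullet> grad \<phi> x) \<partial>lebesgue) = 0)"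
    and mass: "(\<integral>x. mb x \<partial>lebesgue) = M"
  shows "GN_quot r' CH \<alpha> mb wb = Gamma TYPE('a) r' CH q0 b \<alpha>
    \<and> Gamma TYPE('a) r' CH q0 b \<alpha> =
        ereal (n * \<alpha> * (- real_of_ereal (e0 TYPE('a) r' CH q0 b \<alpha> M)) powr ((n * \<alpha> - r) / r)
               * M powr (((\<alpha> + 1) * r - n * \<alpha>) / r) / (r * (1 + \<alpha>))
               * ((r - n * \<alpha>) / (n * \<alpha>)) powr ((r - n * \<alpha>) / r))"
proof -
  have r1: "r > 1" unfolding r_def conj_exp_def using r' by (simp add: field_simps)
  have r0: "r > 0" using r1 by simp
  have n0: "n > 0" unfolding n_def by simp
  define s where "s = n * \<alpha> / r"
  have s0: "0 < s" using alpha n0 r0 by (simp add: s_def)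
  have s1: "s < 1" using alpha n0 r0 by (simp add: s_def field_simps)
  have sdim: "real DIM('a) * \<alpha> / r = s" by (simp add: s_def n_def)
  define CL where "CL = C_L r' CH"
  have CLp: "CL > 0"
  proof -
    have "conj_exp r' > 0" unfolding conj_exp_def using r' by simp
    then show ?thesis unfolding CL_def C_L_def using r' CH by simp
  qed
  have al: "\<alpha> > -1" using alpha by simp
  have a1: "\<alpha> + 1 > 0" using alpha by simp
  have qpos: "qhat DIM('a) r q0 > 0"
  proof -
    have "real DIM('a) = n" by (simp add: n_def)
    moreover have "2 * n / (n + 2) > 0" using n0 by simp
    moreover have "r = n \<Longrightarrow> q0 > 0" using q0 \<open>2 * n / (n + 2) > 0\<close> by linarith
    moreover have "r < n \<Longrightarrow> n / (n - r + 1) > 0" using n0 by simp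
    ultimately show ?thesis unfolding qhat_def using r0 by auto
  qed
  let ?e0 = "e0 TYPE('a) r' CH q0 b \<alpha> M"
  have e0_le: "?e0 \<le> E0 r' CH \<alpha> m w" if "admissible_M r q0 b M m w" for m :: "'a \<Rightarrow> real" and w
  proof -
    have "(m, w) \<in> {(m :: 'a \<Rightarrow> real, w). admissible_M (conj_exp r') q0 b M m w}"
      using that by (simp add: r_def)
    from INF_lower[OF this, of "\<lambda>mw. E0 r' CH \<alpha> (fst mw) (snd mw)"] show ?thesis
      unfolding e0_def by simp
  qed
  have kinr: "kin r = kin (conj_exp r')" by (simp add: r_def)
  have e0_fin: "?e0 < \<infinity>"
  proof -
    obtain m1 :: "'a \<Rightarrow> real" and w1 where a1: "admissible r q0 b m1 w1" and k1: "kin r m1 w1 < \<infinity>"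
      using exists_fin[OF r1 qpos b] by blast
    define c where "c = M / (\<integral>x. m1 x \<partial>lebesgue)"
    have c: "c > 0" using mass_pos[OF a1] M by (simp add: c_def)
    have am: "admissible_M r q0 b M (\<lambda>x. c * m1 x) (\<lambda>x. c *\<^sub>R w1 x)"
      unfolding admissible_M_def using csc[OF a1 c] mass_pos[OF a1] by (simp add: c_def)
    have "kin r (\<lambda>x. c * m1 x) (\<lambda>x. c *\<^sub>R w1 x) \<noteq> \<infinity>"
      using csc(2)[OF a1 c] k1 by (simp add: ennreal_mult_eq_top_iff)
    then have "E0 r' CH \<alpha> (\<lambda>x. c * m1 x) (\<lambda>x. c *\<^sub>R w1 x) < \<infinity>"
      using E0_lt_top[OF _ al] by (simp add: kinr)
    then show ?thesis by (rule le_less_trans[OF e0_le[OF am]])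
  qed
  have admb: "admissible r q0 b mb wb" using adm by (simp add: admissible_M_def)
  note mbm = adm_meas[OF admb]
  have Pbf: "Pf \<alpha> mb \<noteq> \<infinity>"
  proof -
    have "W1p (\<alpha> + 1) mb" using m_sob alpha by simp
    then have "Lp (\<alpha> + 1) mb" by (simp add: W1p_def)
    then show ?thesis using P_fin mbm(3) by blast
  qed
  have Kbf: "kin r mb wb \<noteq> \<infinity>"
  proof
    assume "kin r mb wb = \<infinity>"
    then have "E0 r' CH \<alpha> mb wb = \<infinity>"
      using E0_Ktop[OF _ Pbf al] CLp by (simp add: kinr CL_def)
    then show False using minimizer e0_fin by simp
  qed
  obtain kb where kb: "kin r mb wb = ennreal kb" "kb \<ge> 0"
    using Kbf by (cases "kin r mb wb") auto
  obtain pb where pb: "Pf \<alpha> mb = ennreal pb" "pb \<ge> 0"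
    using Pbf by (cases "Pf \<alpha> mb") auto
  define e0r where "e0r = CL * kb - pb / (\<alpha> + 1)"
  have E0b: "E0 r' CH \<alpha> mb wb = ereal e0r"
    using E0_fin[of r' mb wb kb \<alpha> pb CH] kb pb al by (simp add: kinr e0r_def CL_def)
  have e0eq: "?e0 = ereal e0r" using E0b minimizer by simp
  have claimA: "\<exists>k p. kin r m w = ennreal k \<and> k \<ge> 0 \<and> Pf \<alpha> m = ennreal p \<and> CL * k > 0 \<and> p > 0
                  \<and> e0r \<le> Vf s (p / (\<alpha> + 1)) (CL * k)"
    if am: "admissible_M r q0 b M m w" and kf: "kin r m w \<noteq> \<infinity>" for m :: "'a \<Rightarrow> real" and w
  proof -
    have a: "admissible r q0 b m w" using am by (simp add: admissible_M_def)
    obtain k where k: "kin r m w = ennreal k" "k \<ge> 0"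
      using kf by (cases "kin r m w") auto
    have Pnt: "Pf \<alpha> m \<noteq> \<infinity>"
    proof
      assume "Pf \<alpha> m = \<infinity>"
      then have "E0 r' CH \<alpha> m w = -\<infinity>" using E0_Ptop[OF _ _ al] kf by (simp add: kinr)
      then show False using e0_le[OF am] e0eq by simp
    qed
    obtain p where p: "Pf \<alpha> m = ennreal p" "p \<ge> 0"
      using Pnt by (cases "Pf \<alpha> m") auto
    have pp: "p > 0" using P_pos[OF a al] p by (cases "p = 0") auto
    have ap: "p / (\<alpha> + 1) > 0" using pp a1 by simp
    have star: "e0r \<le> u * (CL * k) - (p / (\<alpha> + 1)) * u powr s" if u: "u > 0" for u
    proof -
      obtain m' :: "'a \<Rightarrow> real" and w' where am': "admissible_M r q0 b M m' w'"
        and k': "kin r m' w' = ennreal u * kin r m w"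
        and p': "Pf \<alpha> m' = ennreal (u powr (real DIM('a) * \<alpha> / r)) * Pf \<alpha> m"
        using dil[OF am r0 u, of \<alpha>] by blast
      have k'': "kin (conj_exp r') m' w' = ennreal (u * k)"
        using k' k u by (simp add: kinr ennreal_mult)
      have p'': "Pf \<alpha> m' = ennreal (u powr s * p)"
        using p' p u by (simp add: sdim ennreal_mult)
      have "E0 r' CH \<alpha> m' w' = ereal (CL * (u * k) - u powr s * p / (\<alpha> + 1))"
        using E0_fin[OF k'' p'' _ _ al] u k p by (simp add: CL_def)
      then have "ereal e0r \<le> ereal (CL * (u * k) - u powr s * p / (\<alpha> + 1))"
        using e0_le[OF am'] e0eq by simp
      then show ?thesis by (simp add: algebra_simps)
    qed
    have kpos: "CL * k > 0"
    proof (rule ccontr)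
      assume "\<not> CL * k > 0"
      then have k0: "CL * k = 0" using mult_nonneg_nonneg[of CL k] CLp k(2) by linarith
      define U where "U = ((\<bar>e0r\<bar> + 1) * (\<alpha> + 1) / p) powr (1 / s)"
      have Up: "U > 0" using pp a1 by (simp add: U_def)
      have Us: "U powr s = (\<bar>e0r\<bar> + 1) * (\<alpha> + 1) / p"
        using pp a1 s0 by (simp add: U_def powr_powr)
      have "e0r \<le> - ((p / (\<alpha> + 1)) * U powr s)" using star[OF Up] k0 by simp
      also have "(p / (\<alpha> + 1)) * U powr s = \<bar>e0r\<bar> + 1" using pp a1 unfolding Us by simp
      finally show False by simp
    qed
    obtain u where u: "u > 0" "u * (CL * k) - (p / (\<alpha> + 1)) * u powr s = Vf s (p / (\<alpha> + 1)) (CL * k)"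
      using opt_attain[OF kpos ap s0 s1] by blast
    show ?thesis using star[OF u(1)] u(2) k p kpos pp by auto
  qed
  obtain kb' pb' where B: "kin r mb wb = ennreal kb'" "Pf \<alpha> mb = ennreal pb'" "CL * kb' > 0" "pb' > 0"
      "e0r \<le> Vf s (pb' / (\<alpha> + 1)) (CL * kb')" "kb' \<ge> 0"
    using claimA[OF adm Kbf] by blast
  have kbe: "kb' = kb" using B(1) B(6) kb by simp
  have pbe: "pb' = pb" using B(2) B(4) pb by simp
  have kbp: "CL * kb > 0" and pbp: "pb > 0" using B kbe pbe by auto
  have apb: "pb / (\<alpha> + 1) > 0" using pbp a1 by simp
  have "Vf s (pb / (\<alpha> + 1)) (CL * kb) \<le> 1 * (CL * kb) - (pb / (\<alpha> + 1)) * 1 powr s"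
    by (rule opt_ineq[OF kbp apb s0 s1]) simp
  then have e0V: "e0r = Vf s (pb / (\<alpha> + 1)) (CL * kb)"
    using B(5) kbe pbe by (simp add: e0r_def)
  define C2 where "C2 = (1 - s) * s powr (s / (1 - s)) * (\<alpha> + 1) powr (- 1 / (1 - s))"
  have C2p: "C2 > 0" using s0 s1 a1 by (simp add: C2_def)
  define Qb where "Qb = (CL * kb) powr s / pb"
  have Qbp: "Qb > 0" unfolding Qb_def using kbp pbp by (intro divide_pos_pos) auto
  have e0Q: "e0r = - C2 * Qb powr (- 1 / (1 - s))"
    unfolding e0V Qb_def C2_def by (rule Vf_Q[OF kbp pbp s0 s1 al])
  have claimC: "\<exists>k p. kin r m w = ennreal k \<and> k \<ge> 0 \<and> Pf \<alpha> m = ennreal p \<and> p > 0 \<and> CL * k > 0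
                  \<and> Qb \<le> (CL * k) powr s / p"
    if am: "admissible_M r q0 b M m w" and kf: "kin r m w \<noteq> \<infinity>" for m :: "'a \<Rightarrow> real" and w
  proof -
    obtain k p where A: "kin r m w = ennreal k" "k \<ge> 0" "Pf \<alpha> m = ennreal p" "CL * k > 0" "p > 0"
      "e0r \<le> Vf s (p / (\<alpha> + 1)) (CL * k)"
      using claimA[OF am kf] by blast
    have Qp: "(CL * k) powr s / p > 0" using A by (intro divide_pos_pos) auto
    have V: "Vf s (p / (\<alpha> + 1)) (CL * k) = - C2 * ((CL * k) powr s / p) powr (- 1 / (1 - s))"
      unfolding C2_def by (rule Vf_Q[OF A(4) A(5) s0 s1 al])
    have "Qb \<le> (CL * k) powr s / p"
    proof (rule ccontr)
      assume "\<not> Qb \<le> (CL * k) powr s / p"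
      then have lt: "(CL * k) powr s / p < Qb" by simp
      have neg: "- 1 / (1 - s) < 0" using s1 by simp
      have "Qb powr (- 1 / (1 - s)) < ((CL * k) powr s / p) powr (- 1 / (1 - s))"
        by (rule powr_less_mono2_neg[OF neg Qp lt])
      then have "- C2 * ((CL * k) powr s / p) powr (- 1 / (1 - s)) < - C2 * Qb powr (- 1 / (1 - s))"
        using C2p by simp
      then show False using A(6) V e0Q by simp
    qed
    then show ?thesis using A by blast
  qed
  define \<beta> where "\<beta> = ((\<alpha> + 1) * r - n * \<alpha>) / r"
  have \<beta>s: "\<beta> = \<alpha> + 1 - s" using r0 by (simp add: \<beta>_def s_def field_simps)
  have GNform: "GN_quot r' CH \<alpha> m w = ereal ((CL * k) powr s * (\<integral>x. m x \<partial>lebesgue) powr \<beta> / p)"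
    if "kin r m w = ennreal k" "k \<ge> 0" "Pf \<alpha> m = ennreal p" "p \<ge> 0" for m :: "'a \<Rightarrow> real" and w k p
    using that unfolding GN_quot_def Let_def
    by (simp add: kinr[symmetric] CL_def[symmetric] s_def \<beta>_def n_def r_def[symmetric])
  have GNb: "GN_quot r' CH \<alpha> mb wb = ereal (Qb * M powr \<beta>)"
    using GNform[OF kb(1) kb(2) pb(1) pb(2)] mass by (simp add: Qb_def)
  have lower: "GN_quot r' CH \<alpha> mb wb \<le> GN_quot r' CH \<alpha> m w"
    if a: "admissible r q0 b m w" for m :: "'a \<Rightarrow> real" and w
  proof (cases "kin r m w = \<infinity>")
    case True
    then show ?thesis unfolding GN_quot_def Let_def by (simp add: kinr[symmetric])
  next
    case False
    define M' where "M' = (\<integral>x. m x \<partial>lebesgue)"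
    have M'p: "M' > 0" using mass_pos[OF a] by (simp add: M'_def)
    define c where "c = M / M'"
    have c: "c > 0" using M M'p by (simp add: c_def)
    have am: "admissible_M r q0 b M (\<lambda>x. c * m x) (\<lambda>x. c *\<^sub>R w x)"
      unfolding admissible_M_def using csc[OF a c] M'p by (simp add: c_def M'_def)
    have kf': "kin r (\<lambda>x. c * m x) (\<lambda>x. c *\<^sub>R w x) \<noteq> \<infinity>"
      using csc(2)[OF a c] False by (simp add: ennreal_mult_eq_top_iff)
    obtain k' p' where C: "kin r (\<lambda>x. c * m x) (\<lambda>x. c *\<^sub>R w x) = ennreal k'" "k' \<ge> 0"
       "Pf \<alpha> (\<lambda>x. c * m x) = ennreal p'" "p' > 0" "CL * k' > 0" "Qb \<le> (CL * k') powr s / p'"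
      using claimC[OF am kf'] by blast
    obtain k0 where k0: "kin r m w = ennreal k0" "k0 \<ge> 0"
      using False by (cases "kin r m w") auto
    have Pnt: "Pf \<alpha> m \<noteq> \<infinity>"
    proof
      assume "Pf \<alpha> m = \<infinity>"
      then have "Pf \<alpha> (\<lambda>x. c * m x) = \<infinity>" using csc(3)[OF a c, of \<alpha>] c by (simp add: ennreal_mult_top)
      then show False using C(3) by simp
    qed
    obtain p0 where p0: "Pf \<alpha> m = ennreal p0" "p0 \<ge> 0"
      using Pnt by (cases "Pf \<alpha> m") auto
    have k'e: "k' = c * k0"
      using C(1) C(2) csc(2)[OF a c] k0 c by (simp add: ennreal_mult[symmetric])
    have p'e: "p' = c powr (\<alpha> + 1) * p0"
      using C(3) C(4) csc(3)[OF a c, of \<alpha>] p0 c by (simp add: ennreal_mult[symmetric])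
    have GNm: "GN_quot r' CH \<alpha> m w = ereal ((CL * k0) powr s * M' powr \<beta> / p0)"
      using GNform[OF k0(1) k0(2) p0(1) p0(2)] by (simp add: M'_def)
    have p0p: "p0 > 0" using C(4) p'e p0(2) by (cases "p0 = 0") auto
    have k0p: "CL * k0 > 0" using C(5) k'e c CLp by (simp add: zero_less_mult_iff)
    have eq: "(CL * k0) powr s * M' powr \<beta> / p0 = (CL * k') powr s / p' * M powr \<beta>"
    proof -
      have Mc: "M = c * M'" using M'p by (simp add: c_def)
      have "(CL * k') powr s / p' * M powr \<beta>
          = (c powr s * c powr \<beta> / c powr (\<alpha> + 1)) * ((CL * k0) powr s * M' powr \<beta> / p0)"
        unfolding k'e p'e Mc using c CLp k0(2) M'p
        by (simp add: powr_mult mult_ac)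
      also have "c powr s * c powr \<beta> / c powr (\<alpha> + 1) = 1"
        using c by (simp add: \<beta>s flip: powr_add)
      finally show ?thesis by simp
    qed
    have "Qb * M powr \<beta> \<le> (CL * k') powr s / p' * M powr \<beta>"
      using C(6) M by (intro mult_right_mono) auto
    then show ?thesis unfolding GNb GNm eq by simp
  qed
  have GammaEq: "Gamma TYPE('a) r' CH q0 b \<alpha> = GN_quot r' CH \<alpha> mb wb"
  proof (rule antisym)
    have "(mb, wb) \<in> {(m :: 'a \<Rightarrow> real, w). admissible (conj_exp r') q0 b m w}"
      using admb by (simp add: r_def)
    from INF_lower[OF this, of "\<lambda>mw. GN_quot r' CH \<alpha> (fst mw) (snd mw)"]
    show "Gamma TYPE('a) r' CH q0 b \<alpha> \<le> GN_quot r' CH \<alpha> mb wb" unfolding Gamma_def by simp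
    show "GN_quot r' CH \<alpha> mb wb \<le> Gamma TYPE('a) r' CH q0 b \<alpha>"
      unfolding Gamma_def
    proof (rule INF_greatest)
      fix mw assume "mw \<in> {(m :: 'a \<Rightarrow> real, w). admissible (conj_exp r') q0 b m w}"
      then have "admissible r q0 b (fst mw) (snd mw)" by (auto simp: r_def)
      then show "GN_quot r' CH \<alpha> mb wb \<le> GN_quot r' CH \<alpha> (fst mw) (snd mw)" by (rule lower)
    qed
  qed
  have QF: "Qb = s / (1 + \<alpha>) * (- e0r) powr (s - 1) * ((1 - s) / s) powr (1 - s)"
    by (rule final_alg[OF Qbp s0 s1 al]) (simp add: e0Q C2_def)
  have ex1: "(n * \<alpha> - r) / r = s - 1" using r0 by (simp add: s_def field_simps)
  have ex2: "(r - n * \<alpha>) / (n * \<alpha>) = (1 - s) / s" using r0 n0 alpha by (simp add: s_def field_simps)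
  have ex3: "(r - n * \<alpha>) / r = 1 - s" using r0 by (simp add: s_def field_simps)
  have ex4: "((\<alpha> + 1) * r - n * \<alpha>) / r = \<beta>" by (simp add: \<beta>_def)
  have gen: "\<And>X Y Z. n * \<alpha> * X * Z / (r * (1 + \<alpha>)) * Y = s / (1 + \<alpha>) * X * Y * Z"
    by (simp add: s_def field_simps)
  have fin: "n * \<alpha> * (- e0r) powr ((n * \<alpha> - r) / r) * M powr (((\<alpha> + 1) * r - n * \<alpha>) / r) / (r * (1 + \<alpha>))
               * ((r - n * \<alpha>) / (n * \<alpha>)) powr ((r - n * \<alpha>) / r) = Qb * M powr \<beta>"
    unfolding ex1 ex2 ex3 ex4 gen QF by simp
  show ?thesis
    using GammaEq GNb fin e0eq by simp
qed


end
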